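(* Let $U^*$ and $V^*$ be standard uniform random variables with arbitrary dependence, let $T_1,T_2$ be regular uniform-distribution-preserving transformations, and let $Z_1,Z_2$ be $\mathcal{U}(0,1)$ random variables, independent of each other and of $(U^*,V^* )$ (independent stochastic inversion). Set $U=T_1^\leftarrow(U^*,Z_1)$ and $V=T_2^\leftarrow(V^*,Z_2)$. Then the distribution of $(U,V)$ is (i) v-symmetric, i.e. $(U,V)\stackrel{d}{=}(1-U,V)$, if $T_1$ is symmetric around $0.5$; (ii) h-symmetric, i.e. $(U,V)\stackrel{d}{=}(U,1-V)$, if $T_2$ is symmetric around $0.5$; (iii) jointly symmetric (both h- and v-symmetric) if both $T_1$ and $T_2$ are symmetric around $0.5$.
   Context: $T:[0,1]\to[0,1]$ is uniform-distribution-preserving (udp) if $T(U)\sim\mathcal{U}(0,1)$ for $U\sim\mathcal{U}(0,1)$; it is regular if there is a finite partition $0=a_0<\dots<a_L=1$ with $T$ continuously differentiable on each $A_\ell=(a_{\ell-1},a_\ell)$; $A=\bigcup_\ell A_\ell$. $T$ is symmetric around $0.5$ if $T(1-u)=T(u)$ for all $u$. Stochastic inverse: for $x\in T(A)$, with $\{u\in A:T(u)=x\}=\{r_1(x),\dots,r_{n(x)}(x)\}$ (finite, ordered increasingly), let $G_x$ be the distribution function of the discrete law putting mass $1/|T'(r_i(x))|$ on $r_i(x)$ (these sum to one) and set $T^\leftarrow(x,Z)=G_x^{-1}(Z)$, with $G^{-1}(z)=\inf\{t:G(t)\ge z\}$; for $x\notin T(A)$, $T^\leftarrow(x,Z)=0$.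 *)

theory Defs
  imports "HOL-Probability.Probability"
begin

definition unif01 :: "real measure" where
  "unif01 = uniform_measure lborel {0..1}"

definition udp :: "(real \<Rightarrow> real) \<Rightarrow> bool" where
  "udp T \<longleftrightarrow> (\<forall>u\<in>{0..1}. T u \<in> {0..1})
     \<and> T \<in> borel_measurable (restrict_space borel {0..1})
     \<and> distr (restrict_space lborel {0..1}) lborel T = unif01"

definition regular_partition :: "(real \<Rightarrow> real) \<Rightarrow> (nat \<Rightarrow> real) \<Rightarrow> nat \<Rightarrow> bool" where
  "regular_partition T a L \<longleftrightarrow> 1 \<le> L \<and> a 0 = 0 \<and> a L = 1
     \<and> (\<forall>l<L. a l < a (Suc l))
     \<and> (\<forall>l<L. \<exists>T'. continuous_on {a l<..<a (Suc l)} T'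
            \<and> (\<forall>u\<in>{a l<..<a (Suc l)}. (T has_real_derivative T' u) (at u)))"

definition part_set :: "(nat \<Rightarrow> real) \<Rightarrow> nat \<Rightarrow> real set" where
  "part_set a L = (\<Union>l<L. {a l<..<a (Suc l)})"

definition stoch_G :: "(real \<Rightarrow> real) \<Rightarrow> real set \<Rightarrow> real \<Rightarrow> real \<Rightarrow> real" where
  "stoch_G T A x t = (\<Sum>r\<in>{u\<in>A. T u = x \<and> u \<le> t}. 1 / \<bar>deriv T r\<bar>)"

definition stoch_inv :: "(real \<Rightarrow> real) \<Rightarrow> real set \<Rightarrow> real \<Rightarrow> real \<Rightarrow> real" where
  "stoch_inv T A x z = (if x \<in> T ` A then Inf {t. z \<le> stoch_G T A x t} else 0)"

definition symmetric_half :: "(real \<Rightarrow> real) \<Rightarrow> bool" where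
  "symmetric_half T \<longleftrightarrow> (\<forall>u\<in>{0..1}. T (1 - u) = T u)"

end

theory Submission
  imports Defs
begin

lemma unif01_emeasure:
  assumes "B \<in> sets borel"
  shows "emeasure unif01 B = emeasure lborel (B \<inter> {0..1})"
  using assms by (simp add: unif01_def Int_commute divide_ennreal_def)

locale regT =
  fixes T :: "real \<Rightarrow> real" and a :: "nat \<Rightarrow> real" and L :: nat
  assumes udpT: "udp T" and regT: "regular_partition T a L"
begin

definition P :: "nat \<Rightarrow> real set" where "P l = {a l<..<a (Suc l)}"
definition A where "A = part_set a L"

definition D :: "nat \<Rightarrow> real \<Rightarrow> real" where
  "D l = (SOME T'. continuous_on (P l) T' \<and> (\<forall>u\<in>P l. (T has_real_derivative T' u) (at u)))"

lemma L_pos: "1 \<le> L" and a0: "a 0 = 0" and aL: "a L = 1"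
  and a_step: "l < L \<Longrightarrow> a l < a (Suc l)"
  using regT unfolding regular_partition_def by auto

lemma D_props: assumes "l < L"
  shows "continuous_on (P l) (D l)" "\<And>u. u \<in> P l \<Longrightarrow> (T has_real_derivative D l u) (at u)"
proof -
  have "\<exists>T'. continuous_on (P l) T' \<and> (\<forall>u\<in>P l. (T has_real_derivative T' u) (at u))"
    using regT assms unfolding regular_partition_def P_def by auto
  from someI_ex[OF this] show "continuous_on (P l) (D l)" "\<And>u. u \<in> P l \<Longrightarrow> (T has_real_derivative D l u) (at u)"
    unfolding D_def by auto
qed

lemma a_mono: "i < j \<Longrightarrow> j \<le> L \<Longrightarrow> a i < a j"
proof (induction j)
  case 0 then show ?case by simp
next
  case (Suc j)
  have jL: "j < L" using Suc.prems by simp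
  show ?case
  proof (cases "i = j")
    case True then show ?thesis using a_step[OF jL] by simp
  next
    case False
    then have "i < j" using Suc.prems by simp
    then have "a i < a j" using Suc.IH jL by simp
    then show ?thesis using a_step[OF jL] by simp
  qed
qed

lemma a_le_mono: "i \<le> j \<Longrightarrow> j \<le> L \<Longrightarrow> a i \<le> a j"
  using a_mono by (metis le_less order_refl)

lemma a_range: "l \<le> L \<Longrightarrow> 0 \<le> a l \<and> a l \<le> 1"
  using a_le_mono[of 0 l] a_le_mono[of l L] a0 aL by auto

lemma P_sub: "l < L \<Longrightarrow> P l \<subseteq> {0<..<1}"
  using a_range[of l] a_range[of "Suc l"] unfolding P_def by auto

lemma A_eq: "A = (\<Union>l<L. P l)"
  unfolding A_def part_set_def P_def by simp

lemma A_sub: "A \<subseteq> {0<..<1}"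
  using P_sub A_eq by auto

lemma P_disj: assumes "l < L" "k < L" "l \<noteq> k" shows "P l \<inter> P k = {}"
proof -
  { fix l k assume "l < k" "k < L"
    then have "a (Suc l) \<le> a k" using a_le_mono[of "Suc l" k] by auto
    then have "P l \<inter> P k = {}" unfolding P_def by auto } note * = this
  show ?thesis
  proof (cases "l < k")
    case True then show ?thesis using * assms by blast
  next
    case False then have "k < l" using assms by simp
    then show ?thesis using * assms by blast
  qed
qed

lemma A_cover: assumes "x \<in> {0..1}" "x \<notin> a ` {..L}" shows "x \<in> A"
proof -
  define S where "S = {l. l \<le> L \<and> a l < x}"
  have "a 0 \<in> a ` {..L}" by simp
  then have "x \<noteq> 0" using assms(2) a0 by metis
  then have "0 < x" using assms(1) by simp
  then have "0 \<in> S" unfolding S_def using a0 by simp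
  have fin: "finite S" unfolding S_def by auto
  define l where "l = Max S"
  have lS: "l \<in> S" using fin \<open>0 \<in> S\<close> l_def Max_in by blast
  have "l \<noteq> L" using lS assms(1) aL unfolding S_def by auto
  then have lL: "l < L" using lS unfolding S_def by auto
  have "Suc l \<notin> S"
  proof
    assume "Suc l \<in> S" then have "Suc l \<le> l" using Max_ge[OF fin] l_def by blast
    then show False by simp
  qed
  then have "x \<le> a (Suc l)" using lL unfolding S_def by auto
  moreover have "a (Suc l) \<in> a ` {..L}" using lL by simp
  then have "x \<noteq> a (Suc l)" using assms(2) by metis
  ultimately have "x \<in> P l" using lS unfolding S_def P_def by auto
  then show ?thesis using A_eq lL by auto
qed

lemma T_range: "u \<in> {0..1} \<Longrightarrow> T u \<in> {0..1}"
  using udpT unfolding udp_def by auto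

lemma K: assumes B: "B \<in> sets borel"
  shows "emeasure lborel ({u\<in>{0..1}. T u \<in> B}) = emeasure lborel (B \<inter> {0..1})"
proof -
  have meas: "T \<in> borel_measurable (restrict_space borel {0..1})"
    using udpT unfolding udp_def by auto
  have meas': "T \<in> measurable (restrict_space lborel {0..1}) lborel"
    using meas by (simp add: measurable_def space_restrict_space sets_restrict_space)
  have "emeasure (distr (restrict_space lborel {0..1}) lborel T) B = emeasure unif01 B"
    using udpT unfolding udp_def by simp
  also have "\<dots> = emeasure lborel (B \<inter> {0..1})" using unif01_emeasure[OF B] .
  also have "emeasure (distr (restrict_space lborel {0..1}) lborel T) B
      = emeasure (restrict_space lborel {0..1}) (T -` B \<inter> {0..1})"
    using emeasure_distr[OF meas'] B by (simp add: space_restrict_space)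
  also have "\<dots> = emeasure lborel (T -` B \<inter> {0..1})"
    by (rule emeasure_restrict_space) auto
  finally have "emeasure lborel (T -` B \<inter> {0..1}) = emeasure lborel (B \<inter> {0..1})" by simp
  moreover have "{u\<in>{0..1}. T u \<in> B} = T -` B \<inter> {0..1}" by auto
  ultimately show ?thesis by simp
qed

end

lemma lip_bound:
  fixes f f' :: "real \<Rightarrow> real"
  assumes "a \<le> b" and der: "\<And>x. x \<in> {a..b} \<Longrightarrow> (f has_real_derivative f' x) (at x)"
    and bd: "\<And>x. x \<in> {a..b} \<Longrightarrow> \<bar>f' x\<bar> \<le> e"
  shows "\<bar>f b - f a\<bar> \<le> e * (b - a)"
proof (cases "a = b")
  case True then show ?thesis by simp
next
  case False
  then have ab: "a < b" using assms(1) by simp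
  have cont: "continuous_on {a..b} f"
    by (rule DERIV_atLeastAtMost_imp_continuous_on) (use der in auto)
  have "f differentiable (at x)" if "a < x" "x < b" for x
  proof -
    have "x \<in> {a..b}" using that by simp
    then show ?thesis using der real_differentiable_def by blast
  qed
  from MVT[OF ab cont this] obtain l z where z: "a < z" "z < b" "DERIV f z :> l" "f b - f a = (b - a) * l"
    by blast
  have "l = f' z" using DERIV_unique[OF z(3) der[of z]] z by simp
  then have "\<bar>l\<bar> \<le> e" using bd[of z] z by simp
  then have "\<bar>(b - a) * l\<bar> \<le> (b - a) * e" using ab by (simp add: abs_mult mult_left_mono)
  then show ?thesis using z(4) by (simp add: mult.commute)
qed

context regT begin

lemma P_open: "open (P l)" unfolding P_def by simp

lemma Tpre_meas: assumes B: "B \<in> sets borel" shows "{u\<in>{0..1}. T u \<in> B} \<in> sets borel"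
proof -
  have meas: "T \<in> borel_measurable (restrict_space borel {0..1})"
    using udpT unfolding udp_def by auto
  have "T -` B \<inter> space (restrict_space borel {0..1}) \<in> sets (restrict_space borel {0..1})"
    using measurable_sets[OF meas B] .
  then have "T -` B \<inter> {0..1} \<in> sets borel"
    by (simp add: space_restrict_space sets_restrict_space_iff)
  moreover have "{u\<in>{0..1}. T u \<in> B} = T -` B \<inter> {0..1}" by auto
  ultimately show ?thesis by simp
qed

lemma absD: assumes l: "l < L" and c: "c \<in> P l" shows "1 \<le> \<bar>D l c\<bar>"
proof (rule ccontr)
  assume "\<not> 1 \<le> \<bar>D l c\<bar>"
  then have lt: "\<bar>D l c\<bar> < 1" by simp
  define e where "e = (1 + \<bar>D l c\<bar>) / 2"
  have e1: "e < 1" and e0: "0 \<le> e" using lt unfolding e_def by auto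
  have "(1 - \<bar>D l c\<bar>) / 2 > 0" using lt by simp
  then obtain d0 where d0: "d0 > 0" "\<And>u. u \<in> P l \<Longrightarrow> dist u c < d0 \<Longrightarrow> dist (D l u) (D l c) < (1 - \<bar>D l c\<bar>) / 2"
    using D_props(1)[OF l] c unfolding continuous_on_iff by metis
  obtain d1 where d1: "d1 > 0" "ball c d1 \<subseteq> P l"
    using P_open c open_contains_ball by blast
  define h where "h = min d0 d1 / 2"
  have h0: "h > 0" using d0 d1 unfolding h_def by simp
  have sub: "{c - h..c + h} \<subseteq> P l"
  proof
    fix u assume "u \<in> {c - h..c + h}"
    then have "dist u c < d1" using h0 unfolding h_def dist_real_def by auto
    then show "u \<in> P l" using d1 by (auto simp: dist_commute)
  qed
  have bdD: "\<bar>D l u\<bar> \<le> e" if "u \<in> {c - h..c + h}" for u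
  proof -
    have "dist u c < d0" using that h0 unfolding h_def dist_real_def by auto
    then have "\<bar>D l u - D l c\<bar> < (1 - \<bar>D l c\<bar>) / 2" using d0(2)[of u] sub that
      by (auto simp: dist_real_def)
    then show ?thesis using abs_triangle_ineq[of "D l u - D l c" "D l c"] unfolding e_def by simp
  qed
  have derT: "\<And>x. x \<in> {c-h..c+h} \<Longrightarrow> (T has_real_derivative D l x) (at x)"
    using D_props(2)[OF l] sub by blast
  have incl: "{c - h..c + h} \<subseteq> {u\<in>{0..1}. T u \<in> {T c - e * h..T c + e * h}}"
  proof
    fix u assume u: "u \<in> {c - h..c + h}"
    have "u \<in> {0<..<1}" using sub u P_sub[OF l] by blast
    then have u01: "u \<in> {0..1}" by simp
    have "\<bar>T u - T c\<bar> \<le> e * h"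
    proof (cases "c \<le> u")
      case True
      have "\<bar>T u - T c\<bar> \<le> e * (u - c)"
        apply (rule lip_bound[where f=T and f'="D l", OF True])
        using derT bdD u h0 by auto
      also have "\<dots> \<le> e * h" using u e0 by (intro mult_left_mono) auto
      finally show ?thesis .
    next
      case False
      have "\<bar>T c - T u\<bar> \<le> e * (c - u)"
        apply (rule lip_bound[where f=T and f'="D l"]) using False apply simp
        using derT bdD u h0 by auto
      also have "\<dots> \<le> e * h" using u e0 by (intro mult_left_mono) auto
      finally show ?thesis by (simp add: abs_minus_commute)
    qed
    then show "u \<in> {u\<in>{0..1}. T u \<in> {T c - e * h..T c + e * h}}" using u01 by auto
  qed
  have "ennreal (2 * h) = emeasure lborel {c - h..c + h}" using h0 by simp
  also have "\<dots> \<le> emeasure lborel {u\<in>{0..1}. T u \<in> {T c - e * h..T c + e * h}}"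
    by (rule emeasure_mono[OF incl]) (use Tpre_meas[of "{T c - e * h..T c + e * h}"] in simp)
  also have "\<dots> = emeasure lborel ({T c - e * h..T c + e * h} \<inter> {0..1})" by (rule K) simp
  also have "\<dots> \<le> emeasure lborel {T c - e * h..T c + e * h}" by (rule emeasure_mono) auto
  also have "\<dots> = ennreal (2 * e * h)" using h0 e0 by simp
  finally have "2 * h \<le> 2 * e * h" using h0 e0 by (simp add: ennreal_le_iff)
  then show False using h0 e1 by (simp add: mult_le_cancel_right1)
qed

definition incr :: "nat \<Rightarrow> bool" where "incr l \<longleftrightarrow> (\<forall>u\<in>P l. 1 \<le> D l u)"

lemma sign: assumes l: "l < L" and "\<not> incr l" and "u \<in> P l" shows "D l u \<le> -1"
proof (rule ccontr)
  assume "\<not> D l u \<le> -1"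
  then have u1: "1 \<le> D l u" using absD[OF l assms(3)] by linarith
  obtain v where v: "v \<in> P l" "D l v < 1" using assms(2) unfolding incr_def by auto
  then have v1: "D l v \<le> -1" using absD[OF l v(1)] by linarith
  have cont: "continuous_on {min u v..max u v} (D l)"
    apply (rule continuous_on_subset[OF D_props(1)[OF l]])
    using assms(3) v(1) unfolding P_def by auto
  have "\<exists>w. min u v \<le> w \<and> w \<le> max u v \<and> D l w = 0"
  proof (cases "u \<le> v")
    case True then show ?thesis using IVT2'[of "D l" v 0 u] cont u1 v1 by auto
  next
    case False then show ?thesis using IVT'[of "D l" v 0 u] cont u1 v1 by auto
  qed
  then obtain w where w: "min u v \<le> w" "w \<le> max u v" "D l w = 0" by blast
  have "w \<in> P l" using w assms(3) v(1) unfolding P_def by auto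
  then show False using absD[OF l] w(3) by fastforce
qed

lemma T_incr: assumes l: "l < L" "incr l" and uv: "u \<in> P l" "v \<in> P l" "u < v" shows "T u < T v"
proof (rule DERIV_pos_imp_increasing[OF uv(3)])
  fix x assume "u \<le> x" "x \<le> v"
  then have "x \<in> P l" using uv unfolding P_def by auto
  then have "DERIV T x :> D l x" "1 \<le> D l x" using D_props(2)[OF l(1)] l(2) unfolding incr_def by auto
  then show "\<exists>y. DERIV T x :> y \<and> 0 < y" by (intro exI[of _ "D l x"]) simp
qed

lemma T_decr: assumes l: "l < L" "\<not> incr l" and uv: "u \<in> P l" "v \<in> P l" "u < v" shows "T u > T v"
proof (rule DERIV_neg_imp_decreasing[OF uv(3)])
  fix x assume "u \<le> x" "x \<le> v"
  then have "x \<in> P l" using uv unfolding P_def by auto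
  then have "DERIV T x :> D l x" "D l x \<le> -1" using D_props(2)[OF l(1)] sign[OF l] by auto
  then show "\<exists>y. DERIV T x :> y \<and> y < 0" by (intro exI[of _ "D l x"]) simp
qed

lemma T_inj: assumes l: "l < L" shows "inj_on T (P l)"
proof (rule inj_onI)
  fix u v assume uv: "u \<in> P l" "v \<in> P l" "T u = T v"
  show "u = v"
  proof (rule ccontr)
    assume "u \<noteq> v"
    then consider "u < v" | "v < u" by linarith
    then show False
    proof cases
      case 1 then show False using T_incr[OF l _ uv(1,2)] T_decr[OF l _ uv(1,2)] uv(3) by (cases "incr l") auto
    next
      case 2 then show False using T_incr[OF l _ uv(2,1)] T_decr[OF l _ uv(2,1)] uv(3) by (cases "incr l") auto
    qed
  qed
qed

lemma deriv_eq: "l < L \<Longrightarrow> u \<in> P l \<Longrightarrow> deriv T u = D l u"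
  using D_props(2) DERIV_imp_deriv by blast

lemma T_cont: "l < L \<Longrightarrow> continuous_on (P l) T"
  using D_props(2) DERIV_continuous continuous_at_imp_continuous_on by blast

definition iota :: "nat \<Rightarrow> real \<Rightarrow> real" where
  "iota l x = (THE r. r \<in> P l \<and> T r = x)"

lemma iota: assumes "l < L" "r \<in> P l" "T r = x" shows "iota l x = r"
  unfolding iota_def
  using T_inj[OF assms(1)] assms by (intro the_equality) (auto dest: inj_onD)

lemma iota_in: assumes "l < L" "x \<in> T ` P l" shows "iota l x \<in> P l" "T (iota l x) = x"
  using iota[OF assms(1)] assms(2) by auto

end

context regT begin

lemma P_is_interval: "is_interval (P l \<inter> {..t})"
  unfolding P_def by (intro is_interval_Int) (auto simp: is_interval_1)

lemma image_borel: "l < L \<Longrightarrow> T ` (P l \<inter> {..t}) \<in> sets borel"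
proof -
  assume l: "l < L"
  have "connected (P l \<inter> {..t})" using P_is_interval is_interval_connected by blast
  moreover have "continuous_on (P l \<inter> {..t}) T" using T_cont[OF l] continuous_on_subset by blast
  ultimately have "connected (T ` (P l \<inter> {..t}))" using connected_continuous_image by blast
  then have "is_interval (T ` (P l \<inter> {..t}))" using is_interval_connected_1 by blast
  then show ?thesis by (rule real_interval_borel_measurable)
qed

lemma image_borel': "l < L \<Longrightarrow> T ` P l \<in> sets borel"
proof -
  assume l: "l < L"
  have "T ` P l = T ` (P l \<inter> {..1})" using P_sub[OF l] by auto
  then show ?thesis using image_borel[OF l] by simp
qed

lemma roots_piece: assumes l: "l < L"
  shows "{u\<in>P l. T u = x \<and> u \<le> t} = (if x \<in> T ` (P l \<inter> {..t}) then {iota l x} else {})"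
proof (cases "x \<in> T ` (P l \<inter> {..t})")
  case True
  then obtain r where r: "r \<in> P l" "r \<le> t" "x = T r" by auto
  then have ir: "iota l x = r" using iota[OF l] by simp
  have "{u\<in>P l. T u = x \<and> u \<le> t} = {r}"
    using r T_inj[OF l] by (auto dest: inj_onD)
  then show ?thesis using True ir by simp
next
  case False then show ?thesis by auto
qed

lemma G_dec: "stoch_G T A x t = (\<Sum>l<L. if x \<in> T ` (P l \<inter> {..t}) then 1 / \<bar>D l (iota l x)\<bar> else 0)"
proof -
  have eq: "{u\<in>A. T u = x \<and> u \<le> t} = (\<Union>l\<in>{..<L}. {u\<in>P l. T u = x \<and> u \<le> t})"
    unfolding A_eq by auto
  have "stoch_G T A x t = (\<Sum>r\<in>(\<Union>l\<in>{..<L}. {u\<in>P l. T u = x \<and> u \<le> t}). 1 / \<bar>deriv T r\<bar>)"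
    unfolding stoch_G_def eq ..
  also have "\<dots> = (\<Sum>l<L. \<Sum>r\<in>{u\<in>P l. T u = x \<and> u \<le> t}. 1 / \<bar>deriv T r\<bar>)"
  proof (rule sum.UNION_disjoint)
    show "finite {..<L}" by simp
    show "\<forall>l\<in>{..<L}. finite {u\<in>P l. T u = x \<and> u \<le> t}"
      using roots_piece by simp
    show "\<forall>i\<in>{..<L}. \<forall>j\<in>{..<L}. i \<noteq> j \<longrightarrow> {u\<in>P i. T u = x \<and> u \<le> t} \<inter> {u\<in>P j. T u = x \<and> u \<le> t} = {}"
      using P_disj by blast
  qed
  also have "\<dots> = (\<Sum>l<L. if x \<in> T ` (P l \<inter> {..t}) then 1 / \<bar>D l (iota l x)\<bar> else 0)"
  proof (rule sum.cong[OF refl])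
    fix l assume "l \<in> {..<L}"
    then have l: "l < L" by simp
    show "(\<Sum>r\<in>{u\<in>P l. T u = x \<and> u \<le> t}. 1 / \<bar>deriv T r\<bar>) =
        (if x \<in> T ` (P l \<inter> {..t}) then 1 / \<bar>D l (iota l x)\<bar> else 0)"
    proof (cases "x \<in> T ` (P l \<inter> {..t})")
      case True
      then have "x \<in> T ` P l" by auto
      then have "iota l x \<in> P l" using iota_in[OF l] by simp
      then show ?thesis using True roots_piece[OF l] deriv_eq[OF l] by simp
    next
      case False then show ?thesis using roots_piece[OF l] by simp
    qed
  qed
  finally show ?thesis .
qed

lemma roots_finite: "finite {u\<in>A. T u = x}"
proof -
  have "{u\<in>A. T u = x} = (\<Union>l\<in>{..<L}. {u\<in>P l. T u = x \<and> u \<le> 1})"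
  proof -
    have "\<And>l u. l < L \<Longrightarrow> u \<in> P l \<Longrightarrow> u \<le> 1"
      using P_sub by (meson greaterThanLessThan_iff less_imp_le subsetD)
    then show ?thesis unfolding A_eq by blast
  qed
  then show ?thesis using roots_piece by simp
qed

definition iota' :: "nat \<Rightarrow> real \<Rightarrow> real" where
  "iota' l x = (if x \<in> T ` P l then iota l x else 0)"

lemma iota'_meas: assumes l: "l < L" shows "iota' l \<in> borel_measurable borel"
proof (rule borel_measurable_iff_le[THEN iffD2], intro allI)
  fix s
  have "{x. iota' l x \<le> s} = (T ` P l \<inter> T ` (P l \<inter> {..s})) \<union> (- T ` P l \<inter> {x. 0 \<le> s})"
  proof (intro set_eqI iffI)
    fix x assume x: "x \<in> {x. iota' l x \<le> s}"
    show "x \<in> (T ` P l \<inter> T ` (P l \<inter> {..s})) \<union> (- T ` P l \<inter> {x. 0 \<le> s})"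
    proof (cases "x \<in> T ` P l")
      case True
      then have "iota l x \<in> P l" "T (iota l x) = x" "iota l x \<le> s"
        using iota_in[OF l] x unfolding iota'_def by auto
      then have "x \<in> T ` (P l \<inter> {..s})" by (metis IntI atMost_iff image_eqI)
      then show ?thesis using True by simp
    next
      case False then show ?thesis using x unfolding iota'_def by simp
    qed
  next
    fix x assume x: "x \<in> (T ` P l \<inter> T ` (P l \<inter> {..s})) \<union> (- T ` P l \<inter> {x. 0 \<le> s})"
    show "x \<in> {x. iota' l x \<le> s}"
    proof (cases "x \<in> T ` P l")
      case True
      then obtain r where "r \<in> P l" "r \<le> s" "x = T r" using x by auto
      then have "iota l x = r" using iota[OF l] by simp
      then show ?thesis using True \<open>r \<le> s\<close> unfolding iota'_def by simp
    next
      case False then show ?thesis using x unfolding iota'_def by (simp split: if_splits)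
    qed
  qed
  moreover have "(T ` P l \<inter> T ` (P l \<inter> {..s})) \<union> (- T ` P l \<inter> {x. 0 \<le> s}) \<in> sets borel"
    using image_borel[OF l] image_borel'[OF l] by (cases "0 \<le> s") auto
  ultimately show "{x\<in>space borel. iota' l x \<le> s} \<in> sets borel" by simp
qed

definition Dx :: "nat \<Rightarrow> real \<Rightarrow> real" where
  "Dx l u = (if u \<in> P l then D l u else 0)"

lemma Dx_meas: "l < L \<Longrightarrow> Dx l \<in> borel_measurable borel"
  unfolding Dx_def
  by (rule borel_measurable_continuous_on_if) (auto simp: P_open D_props(1) intro: continuous_intros)

lemma G_dec': "stoch_G T A x t = (\<Sum>l<L. if x \<in> T ` (P l \<inter> {..t}) then 1 / \<bar>Dx l (iota' l x)\<bar> else 0)"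
proof -
  have "\<And>l. l < L \<Longrightarrow> x \<in> T ` (P l \<inter> {..t}) \<Longrightarrow> Dx l (iota' l x) = D l (iota l x)"
  proof -
    fix l assume l: "l < L" and "x \<in> T ` (P l \<inter> {..t})"
    then have "x \<in> T ` P l" by auto
    then show "Dx l (iota' l x) = D l (iota l x)" using iota_in[OF l] unfolding Dx_def iota'_def by simp
  qed
  then show ?thesis unfolding G_dec by (intro sum.cong) auto
qed

lemma G_meas: "(\<lambda>x. stoch_G T A x t) \<in> borel_measurable borel"
proof -
  have "(\<lambda>x. (\<Sum>l<L. if x \<in> T ` (P l \<inter> {..t}) then 1 / \<bar>Dx l (iota' l x)\<bar> else 0)) \<in> borel_measurable borel"
  proof (rule borel_measurable_sum)
    fix l assume "l \<in> {..<L}"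
    then have l: "l < L" by simp
    have [measurable]: "iota' l \<in> borel_measurable borel" "Dx l \<in> borel_measurable borel"
      "T ` (P l \<inter> {..t}) \<in> sets borel"
      using iota'_meas[OF l] Dx_meas[OF l] image_borel[OF l] by auto
    show "(\<lambda>x. if x \<in> T ` (P l \<inter> {..t}) then 1 / \<bar>Dx l (iota' l x)\<bar> else 0) \<in> borel_measurable borel"
      by measurable
  qed
  then show ?thesis unfolding G_dec' .
qed

lemma TA_borel: "T ` A \<in> sets borel"
proof -
  have "T ` A = (\<Union>l<L. T ` P l)" unfolding A_eq by auto
  then show ?thesis using image_borel' by auto
qed

end

definition GG :: "real set \<Rightarrow> (real \<Rightarrow> real) \<Rightarrow> real \<Rightarrow> real" where
  "GG R m t = (\<Sum>r\<in>{r\<in>R. r \<le> t}. m r)"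

lemma GG_mono: assumes "finite R" "\<And>r. r \<in> R \<Longrightarrow> 0 \<le> m r" "t \<le> t'"
  shows "GG R m t \<le> GG R m t'"
  unfolding GG_def using assms by (intro sum_mono2) auto

lemma GG_le_lt: assumes "finite R" "\<And>r. r \<in> R \<Longrightarrow> 0 \<le> m r" "t < r"
  shows "GG R m t \<le> (\<Sum>s\<in>{s\<in>R. s < r}. m s)"
  unfolding GG_def using assms by (intro sum_mono2) auto

lemma Q_step:
  assumes fin: "finite R" and pos: "\<And>r. r \<in> R \<Longrightarrow> 0 < m r"
    and z: "0 < z" "z \<le> sum m R"
  shows "\<exists>r\<in>R. {t. z \<le> GG R m t} = {r..} \<and> (\<Sum>s\<in>{s\<in>R. s < r}. m s) < z"
proof -
  have nn: "\<And>r. r \<in> R \<Longrightarrow> 0 \<le> m r" using pos less_imp_le by blast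
  have Rne: "R \<noteq> {}" using z by auto
  define C where "C = {r\<in>R. z \<le> GG R m r}"
  have "GG R m (Max R) = sum m R"
    unfolding GG_def using fin Rne by (intro sum.cong) auto
  then have "Max R \<in> C" unfolding C_def using z fin Rne by simp
  then have Cne: "C \<noteq> {}" by auto
  have finC: "finite C" unfolding C_def using fin by simp
  define r where "r = Min C"
  have rC: "r \<in> C" unfolding r_def using finC Cne by simp
  then have rR: "r \<in> R" and zr: "z \<le> GG R m r" unfolding C_def by auto
  have below: "(\<Sum>s\<in>{s\<in>R. s < r}. m s) < z"
  proof (cases "{s\<in>R. s < r} = {}")
    case True then show ?thesis using z(1) by (metis sum.empty)
  next
    case False
    define r' where "r' = Max {s\<in>R. s < r}"
    have r'in: "r' \<in> {s\<in>R. s < r}" unfolding r'_def using False fin by (intro Max_in) auto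
    have eq: "{s\<in>R. s < r} = {s\<in>R. s \<le> r'}"
    proof
      show "{s\<in>R. s < r} \<subseteq> {s\<in>R. s \<le> r'}" unfolding r'_def using fin by auto
      show "{s\<in>R. s \<le> r'} \<subseteq> {s\<in>R. s < r}" using r'in by auto
    qed
    have "r' \<notin> C"
    proof
      assume "r' \<in> C" then have "r \<le> r'" unfolding r_def using finC by simp
      then show False using r'in by simp
    qed
    then have "GG R m r' < z" using r'in unfolding C_def by auto
    then show ?thesis unfolding eq GG_def .
  qed
  have "{t. z \<le> GG R m t} = {r..}"
  proof (intro set_eqI iffI)
    fix t assume "t \<in> {t. z \<le> GG R m t}"
    then have zt: "z \<le> GG R m t" by simp
    show "t \<in> {r..}"
    proof (rule ccontr)
      assume "t \<notin> {r..}" then have "t < r" by simp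
      then have "GG R m t \<le> (\<Sum>s\<in>{s\<in>R. s < r}. m s)" using GG_le_lt[where R=R and m=m, OF fin nn] by blast
      then show False using zt below by simp
    qed
  next
    fix t assume "t \<in> {r..}"
    then have "GG R m r \<le> GG R m t" using GG_mono[where R=R and m=m, OF fin nn] by simp
    then show "t \<in> {t. z \<le> GG R m t}" using zr by simp
  qed
  then show ?thesis using rR below by blast
qed

lemma Q_le_iff:
  assumes fin: "finite R" and pos: "\<And>r. r \<in> R \<Longrightarrow> 0 < m r"
    and z: "0 < z" "z \<le> sum m R"
  shows "Inf {t. z \<le> GG R m t} \<le> s \<longleftrightarrow> z \<le> GG R m s"
proof -
  obtain r where "r \<in> R" and eq: "{t. z \<le> GG R m t} = {r..}" using Q_step[where R=R and m=m, OF assms] by blast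
  have "(z \<le> GG R m s) \<longleftrightarrow> s \<in> {r..}" unfolding eq[symmetric] by simp
  then show ?thesis using eq by simp
qed

lemma Q_sym:
  assumes fin: "finite R" and pos: "\<And>r. r \<in> R \<Longrightarrow> 0 < m r"
    and tot: "sum m R = 1"
    and sym: "\<And>r. r \<in> R \<Longrightarrow> 1 - r \<in> R \<and> m (1 - r) = m r"
    and z: "0 < z" "z < 1" and zG: "\<And>r. r \<in> R \<Longrightarrow> z \<noteq> GG R m r"
  shows "Inf {t. 1 - z \<le> GG R m t} = 1 - Inf {t. z \<le> GG R m t}"
proof -
  have nn: "\<And>r. r \<in> R \<Longrightarrow> 0 \<le> m r" using pos less_imp_le by blast
  obtain r where rR: "r \<in> R" and set: "{t. z \<le> GG R m t} = {r..}"
    and below: "(\<Sum>s\<in>{s\<in>R. s < r}. m s) < z"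
    using Q_step[where R=R and m=m, OF fin pos z(1)] z tot by auto
  have "z \<le> GG R m r" using set by auto
  then have above: "z < GG R m r" using zG[OF rR] by simp
  have refl_bij: "\<And>X. X \<subseteq> R \<Longrightarrow> (\<Sum>s\<in>X. m s) = (\<Sum>s\<in>(\<lambda>s. 1 - s) ` X. m s)"
  proof -
    fix X assume "X \<subseteq> R"
    have "inj_on (\<lambda>s::real. 1 - s) X" by (auto intro: inj_onI)
    then have "(\<Sum>s\<in>(\<lambda>s. 1 - s) ` X. m s) = (\<Sum>s\<in>X. m (1 - s))" by (simp add: sum.reindex)
    also have "\<dots> = (\<Sum>s\<in>X. m s)" using sym \<open>X \<subseteq> R\<close>
      by (intro sum.cong) auto
    finally show "(\<Sum>s\<in>X. m s) = (\<Sum>s\<in>(\<lambda>s. 1 - s) ` X. m s)" by simp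
  qed
  have img1: "(\<lambda>s. 1 - s) ` {s\<in>R. r \<le> s} = {s\<in>R. s \<le> 1 - r}"
  proof (intro set_eqI iffI)
    fix x assume "x \<in> (\<lambda>s. 1 - s) ` {s\<in>R. r \<le> s}" then show "x \<in> {s\<in>R. s \<le> 1 - r}" using sym by auto
  next
    fix x assume x: "x \<in> {s\<in>R. s \<le> 1 - r}"
    then have "1 - x \<in> {s\<in>R. r \<le> s}" using sym by auto
    then show "x \<in> (\<lambda>s. 1 - s) ` {s\<in>R. r \<le> s}" by (intro image_eqI[of _ _ "1 - x"]) auto
  qed
  have img2: "(\<lambda>s. 1 - s) ` {s\<in>R. r < s} = {s\<in>R. s < 1 - r}"
  proof (intro set_eqI iffI)
    fix x assume "x \<in> (\<lambda>s. 1 - s) ` {s\<in>R. r < s}" then show "x \<in> {s\<in>R. s < 1 - r}" using sym by auto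
  next
    fix x assume x: "x \<in> {s\<in>R. s < 1 - r}"
    then have "1 - x \<in> {s\<in>R. r < s}" using sym by auto
    then show "x \<in> (\<lambda>s. 1 - s) ` {s\<in>R. r < s}" by (intro image_eqI[of _ _ "1 - x"]) auto
  qed
  have split1: "sum m R = (\<Sum>s\<in>{s\<in>R. s < r}. m s) + (\<Sum>s\<in>{s\<in>R. r \<le> s}. m s)"
  proof -
    have "R = {s\<in>R. s < r} \<union> {s\<in>R. r \<le> s}" by auto
    then have "sum m R = sum m ({s\<in>R. s < r} \<union> {s\<in>R. r \<le> s})" by simp
    also have "\<dots> = (\<Sum>s\<in>{s\<in>R. s < r}. m s) + (\<Sum>s\<in>{s\<in>R. r \<le> s}. m s)"
      using fin by (intro sum.union_disjoint) auto
    finally show ?thesis .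
  qed
  have split2: "sum m R = GG R m r + (\<Sum>s\<in>{s\<in>R. r < s}. m s)"
  proof -
    have "R = {s\<in>R. s \<le> r} \<union> {s\<in>R. r < s}" by auto
    then have "sum m R = sum m ({s\<in>R. s \<le> r} \<union> {s\<in>R. r < s})" by simp
    also have "\<dots> = GG R m r + (\<Sum>s\<in>{s\<in>R. r < s}. m s)"
      unfolding GG_def using fin by (intro sum.union_disjoint) auto
    finally show ?thesis .
  qed
  have G1r: "GG R m (1 - r) = 1 - (\<Sum>s\<in>{s\<in>R. s < r}. m s)"
    using refl_bij[of "{s\<in>R. r \<le> s}"] img1 split1 tot unfolding GG_def by auto
  have L1r: "(\<Sum>s\<in>{s\<in>R. s < 1 - r}. m s) = 1 - GG R m r"
    using refl_bij[of "{s\<in>R. r < s}"] img2 split2 tot by auto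
  have "{t. 1 - z \<le> GG R m t} = {1 - r..}"
  proof (intro set_eqI iffI)
    fix t assume "t \<in> {t. 1 - z \<le> GG R m t}"
    then have zt: "1 - z \<le> GG R m t" by simp
    show "t \<in> {1 - r..}"
    proof (rule ccontr)
      assume "t \<notin> {1 - r..}" then have "t < 1 - r" by simp
      then have "GG R m t \<le> (\<Sum>s\<in>{s\<in>R. s < 1 - r}. m s)" using GG_le_lt[where R=R and m=m, OF fin nn] by blast
      then show False using zt L1r above by simp
    qed
  next
    fix t assume "t \<in> {1 - r..}"
    then have "GG R m (1 - r) \<le> GG R m t" using GG_mono[where R=R and m=m, OF fin nn] by simp
    then show "t \<in> {t. 1 - z \<le> GG R m t}" using G1r below by simp
  qed
  then show ?thesis using set by simp
qed


context regT begin

definition R :: "real \<Rightarrow> real set" where "R x = {u\<in>A. T u = x}"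
definition mm :: "real \<Rightarrow> real" where "mm r = 1 / \<bar>deriv T r\<bar>"

lemma G_GG: "stoch_G T A x t = GG (R x) mm t"
  unfolding stoch_G_def GG_def R_def mm_def by (rule sum.cong) auto

lemma R_fin: "finite (R x)" unfolding R_def by (rule roots_finite)

lemma A_piece: "u \<in> A \<Longrightarrow> \<exists>l<L. u \<in> P l" unfolding A_eq by auto

lemma mm_pos: "r \<in> A \<Longrightarrow> 0 < mm r"
proof -
  assume "r \<in> A"
  then obtain l where l: "l < L" "r \<in> P l" using A_piece by blast
  then show "0 < mm r" unfolding mm_def using deriv_eq[OF l] absD[OF l] by auto
qed

lemma mm_pos': "r \<in> R x \<Longrightarrow> 0 < mm r" using mm_pos unfolding R_def by auto

lemma S_eq: "sum mm (R x) = stoch_G T A x 1"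
proof -
  have "R x = {r\<in>R x. r \<le> 1}" unfolding R_def using A_sub by auto
  then show ?thesis unfolding G_GG GG_def by simp
qed

lemma GG_nonneg: "0 \<le> GG (R x) mm t"
  unfolding GG_def using mm_pos' by (intro sum_nonneg) (auto intro: less_imp_le)

lemma GG_le_S: "GG (R x) mm t \<le> sum mm (R x)"
  unfolding GG_def using mm_pos' R_fin by (intro sum_mono2) (auto intro: less_imp_le)

lemma stoch_inv_eq: "stoch_inv T A x z = (if x \<in> T ` A then Inf {t. z \<le> GG (R x) mm t} else 0)"
  unfolding stoch_inv_def G_GG ..

lemma stoch_inv_meas: "(\<lambda>p. stoch_inv T A (fst p) (snd p)) \<in> borel_measurable (borel \<Otimes>\<^sub>M borel)"
proof (rule borel_measurable_iff_le[THEN iffD2], intro allI)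
  fix s
  define S where "S x = stoch_G T A x 1" for x
  have [measurable]: "(\<lambda>x. stoch_G T A x s) \<in> borel_measurable borel" "S \<in> borel_measurable borel"
    "T ` A \<in> sets borel"
    using G_meas TA_borel unfolding S_def by auto
  have eq: "{p\<in>space (borel \<Otimes>\<^sub>M borel). stoch_inv T A (fst p) (snd p) \<le> s} =
     {p\<in>space (borel \<Otimes>\<^sub>M borel). (fst p \<notin> T ` A \<and> 0 \<le> s) \<or>
        (fst p \<in> T ` A \<and> snd p \<le> 0 \<and> Inf (UNIV::real set) \<le> s) \<or>
        (fst p \<in> T ` A \<and> S (fst p) < snd p \<and> Inf ({}::real set) \<le> s) \<or>
        (fst p \<in> T ` A \<and> 0 < snd p \<and> snd p \<le> S (fst p) \<and> snd p \<le> stoch_G T A (fst p) s)}"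
  proof (intro Collect_cong conj_cong refl)
    fix p :: "real \<times> real"
    obtain x z where p: "p = (x, z)" by fastforce
    show "(stoch_inv T A (fst p) (snd p) \<le> s) =
      ((fst p \<notin> T ` A \<and> 0 \<le> s) \<or>
        (fst p \<in> T ` A \<and> snd p \<le> 0 \<and> Inf (UNIV::real set) \<le> s) \<or>
        (fst p \<in> T ` A \<and> S (fst p) < snd p \<and> Inf ({}::real set) \<le> s) \<or>
        (fst p \<in> T ` A \<and> 0 < snd p \<and> snd p \<le> S (fst p) \<and> snd p \<le> stoch_G T A (fst p) s))"
    proof (cases "x \<in> T ` A")
      case False then show ?thesis unfolding p stoch_inv_eq by simp
    next
      case True
      have Sx: "S x = sum mm (R x)" unfolding S_def S_eq ..
      have S0: "0 \<le> S x" unfolding Sx using GG_nonneg[of x 0] GG_le_S[of x 0] by linarith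
      consider "z \<le> 0" | "S x < z" | "0 < z" "z \<le> S x" by linarith
      then show ?thesis
      proof cases
        case 1
        then have "{t. z \<le> GG (R x) mm t} = UNIV" using GG_nonneg[of x] by (auto intro: order_trans)
        moreover have "\<not> S x < z" using 1 S0 by linarith
        ultimately show ?thesis using True 1 unfolding p stoch_inv_eq by simp
      next
        case 2
        then have "{t. z \<le> GG (R x) mm t} = {}" using GG_le_S[of x] Sx by (auto simp: not_le intro: le_less_trans)
        moreover have "\<not> z \<le> 0" using 2 S0 by linarith
        ultimately show ?thesis using True 2 unfolding p stoch_inv_eq by simp
      next
        case 3
        have "Inf {t. z \<le> GG (R x) mm t} \<le> s \<longleftrightarrow> z \<le> GG (R x) mm s"
          by (rule Q_le_iff[where R="R x" and m=mm, OF R_fin mm_pos' 3(1)]) (use 3 Sx in simp_all)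
        then show ?thesis using True 3 unfolding p stoch_inv_eq G_GG by auto
      qed
    qed
  qed
  have "{p\<in>space (borel \<Otimes>\<^sub>M borel). (fst p \<notin> T ` A \<and> 0 \<le> s) \<or>
        (fst p \<in> T ` A \<and> snd p \<le> 0 \<and> Inf (UNIV::real set) \<le> s) \<or>
        (fst p \<in> T ` A \<and> S (fst p) < snd p \<and> Inf ({}::real set) \<le> s) \<or>
        (fst p \<in> T ` A \<and> 0 < snd p \<and> snd p \<le> S (fst p) \<and> snd p \<le> stoch_G T A (fst p) s)}
       \<in> sets (borel \<Otimes>\<^sub>M borel)"
    by measurable
  then show "{p\<in>space (borel \<Otimes>\<^sub>M borel). stoch_inv T A (fst p) (snd p) \<le> s} \<in> sets (borel \<Otimes>\<^sub>M borel)"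
    unfolding eq .
qed

end

lemma subst_open:
  fixes T D f :: "real \<Rightarrow> real" and p q :: real
  assumes pq: "p < q"
    and der: "\<And>u. u \<in> {p<..<q} \<Longrightarrow> (T has_real_derivative D u) (at u)"
    and cont: "continuous_on {p<..<q} D"
    and pos: "\<And>u. u \<in> {p<..<q} \<Longrightarrow> 0 < D u"
    and fm[measurable]: "f \<in> borel_measurable borel" and f0: "\<And>y. 0 \<le> f y"
  shows "(\<integral>\<^sup>+y. ennreal (f y * indicator (T ` {p<..<q}) y) \<partial>lborel)
       = (\<integral>\<^sup>+u. ennreal (f (T u) * D u * indicator {p<..<q} u) \<partial>lborel)"
proof -
  define an where "an n = p + (q - p) / (real n + 3)" for n :: nat
  define bn where "bn n = q - (q - p) / (real n + 3)" for n :: nat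
  have d_pos: "0 < (q - p) / (real n + 3)" for n using pq by simp
  have d_small: "2 * ((q - p) / (real n + 3)) < q - p" for n
  proof -
    have "2 * ((q - p) / (real n + 3)) = (q - p) * (2 / (real n + 3))" by simp
    also have "\<dots> < (q - p) * 1" using pq by (intro mult_strict_left_mono) auto
    finally show ?thesis by simp
  qed
  have an_in: "p < an n" and bn_in: "bn n < q" and ab: "an n < bn n" for n
    using d_pos[of n] d_small[of n] unfolding an_def bn_def by auto
  have d_mono: "(q - p) / (real (Suc n) + 3) \<le> (q - p) / (real n + 3)" for n
    using pq by (intro divide_left_mono) auto
  have an_dec: "an (Suc n) \<le> an n" and bn_inc: "bn n \<le> bn (Suc n)" for n
    using d_mono[of n] unfolding an_def bn_def by auto
  have an_mono: "m \<le> n \<Longrightarrow> an n \<le> an m" for m n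
    by (induction n rule: dec_induct) (auto intro: order_trans an_dec)
  have bn_mono: "m \<le> n \<Longrightarrow> bn m \<le> bn n" for m n
    by (induction n rule: dec_induct) (auto intro: order_trans bn_inc)
  have sub: "{an n..bn n} \<subseteq> {p<..<q}" for n using an_in[of n] bn_in[of n] by auto
  have cover: "\<exists>n. u \<in> {an n..bn n}" if u: "u \<in> {p<..<q}" for u
  proof -
    define e where "e = min (u - p) (q - u)"
    have e0: "e > 0" using u unfolding e_def by simp
    obtain n :: nat where n: "(q - p) / e < real n" using reals_Archimedean2 by blast
    have "q - p < real n * e" using n e0 by (simp add: field_simps)
    also have "\<dots> \<le> (real n + 3) * e" using e0 by (intro mult_right_mono) auto
    finally have "(q - p) / (real n + 3) < e" by (simp add: field_simps)
    then show ?thesis unfolding an_def bn_def e_def by (intro exI[of _ n]) auto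
  qed
  have Tinc: "T u < T v" if "u \<in> {p<..<q}" "v \<in> {p<..<q}" "u < v" for u v
  proof (rule DERIV_pos_imp_increasing[OF that(3)])
    fix x assume "u \<le> x" "x \<le> v"
    then have "x \<in> {p<..<q}" using that by auto
    then show "\<exists>y. DERIV T x :> y \<and> 0 < y" using der pos by blast
  qed
  have Tcont: "continuous_on {p<..<q} T"
    using der DERIV_continuous continuous_at_imp_continuous_on by blast
  have Tcont_n: "continuous_on {an n..bn n} T" for n using continuous_on_subset[OF Tcont sub] .
  have step: "(\<integral>\<^sup>+y. ennreal (f y * indicator {T (an n)..T (bn n)} y) \<partial>lborel)
      = (\<integral>\<^sup>+u. ennreal (f (T u) * D u * indicator {an n..bn n} u) \<partial>lborel)" for n
  proof (rule nn_integral_substitution)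
    show "set_borel_measurable borel {T (an n)..T (bn n)} f" unfolding set_borel_measurable_def by measurable
    show "\<And>x. x \<in> {an n..bn n} \<Longrightarrow> (T has_real_derivative D x) (at x)" using der sub by blast
    show "continuous_on {an n..bn n} D" using continuous_on_subset[OF cont sub] .
    show "\<And>x. x \<in> {an n..bn n} \<Longrightarrow> 0 \<le> D x" using pos sub by (meson less_imp_le subsetD)
    show "an n \<le> bn n" using ab[of n] by simp
  qed
  define F where "F n y = ennreal (f y * indicator {T (an n)..T (bn n)} y)" for n y
  have Tint_sub: "{T (an n)..T (bn n)} \<subseteq> T ` {p<..<q}" for n
  proof
    fix y assume y: "y \<in> {T (an n)..T (bn n)}"
    then obtain x where "an n \<le> x" "x \<le> bn n" "T x = y"
      using IVT'[of T "an n" y "bn n"] ab[of n] Tcont_n[of n] by auto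
    then show "y \<in> T ` {p<..<q}" using sub[of n] by force
  qed
  have Tint_mono: "{T (an m)..T (bn m)} \<subseteq> {T (an n)..T (bn n)}" if "m \<le> n" for m n
  proof -
    have inP: "an k \<in> {p<..<q}" "bn k \<in> {p<..<q}" for k
      using an_in[of k] ab[of k] bn_in[of k] by auto
    have "T (an n) \<le> T (an m)"
    proof (cases "an n = an m")
      case False
      then have "an n < an m" using an_mono[OF that] by simp
      then show ?thesis using Tinc[OF inP(1) inP(1)] by (simp add: less_imp_le)
    qed simp
    moreover have "T (bn m) \<le> T (bn n)"
    proof (cases "bn n = bn m")
      case False
      then have "bn m < bn n" using bn_mono[OF that] by simp
      then show ?thesis using Tinc[OF inP(2) inP(2)] by (simp add: less_imp_le)
    qed simp
    ultimately show ?thesis by auto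
  qed
  have F_inc: "incseq F"
  proof (intro incseq_SucI le_funI)
    fix n y
    show "F n y \<le> F (Suc n) y"
    proof (cases "y \<in> {T (an n)..T (bn n)}")
      case True
      then have "y \<in> {T (an (Suc n))..T (bn (Suc n))}" using Tint_mono[of n "Suc n"] by auto
      then show ?thesis using True unfolding F_def by simp
    next
      case False then show ?thesis unfolding F_def by simp
    qed
  qed
  have F_sup: "(SUP n. F n y) = ennreal (f y * indicator (T ` {p<..<q}) y)" for y
  proof (cases "y \<in> T ` {p<..<q}")
    case True
    then obtain u where u: "u \<in> {p<..<q}" "y = T u" by auto
    obtain n where n: "u \<in> {an n..bn n}" using cover[OF u(1)] by blast
    have inP: "an n \<in> {p<..<q}" "bn n \<in> {p<..<q}"
      using an_in[of n] ab[of n] bn_in[of n] by auto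
    have "T (an n) \<le> T u"
    proof (cases "an n = u")
      case False then have "an n < u" using n by simp
      then show ?thesis using Tinc[OF inP(1) u(1)] by simp
    qed simp
    moreover have "T u \<le> T (bn n)"
    proof (cases "bn n = u")
      case False then have "u < bn n" using n by simp
      then show ?thesis using Tinc[OF u(1) inP(2)] by simp
    qed simp
    ultimately have "T (an n) \<le> y" "y \<le> T (bn n)" using u(2) by auto
    then have Fn: "F n y = ennreal (f y)" unfolding F_def by simp
    have "F m y \<le> ennreal (f y)" for m unfolding F_def by (intro ennreal_leI) (auto simp: f0 indicator_def)
    then have "(SUP n. F n y) = ennreal (f y)"
      using Fn by (intro antisym SUP_least) (auto intro: SUP_upper2[of n])
    then show ?thesis using True by simp
  next
    case False
    then have "F n y = 0" for n unfolding F_def using Tint_sub[of n] by (auto simp: indicator_def)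
    then show ?thesis using False by simp
  qed
  define G where "G n u = ennreal (f (T u) * D u * indicator {an n..bn n} u)" for n u
  have G_meas: "G n \<in> borel_measurable borel" for n
  proof -
    have "T \<in> borel_measurable (restrict_space borel {an n..bn n})"
      by (rule borel_measurable_continuous_on_restrict[OF Tcont_n])
    moreover have "D \<in> borel_measurable (restrict_space borel {an n..bn n})"
      by (rule borel_measurable_continuous_on_restrict[OF continuous_on_subset[OF cont sub]])
    ultimately have "(\<lambda>u. f (T u) * D u) \<in> borel_measurable (restrict_space borel {an n..bn n})"
      by measurable
    then have "(\<lambda>u. indicator {an n..bn n} u *\<^sub>R (f (T u) * D u)) \<in> borel_measurable borel"
      by (subst (asm) borel_measurable_restrict_space_iff) auto
    then show ?thesis unfolding G_def by (simp add: mult.commute mult.left_commute)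
  qed
  have G_inc: "incseq G"
  proof (intro incseq_SucI le_funI)
    fix n u
    show "G n u \<le> G (Suc n) u"
    proof (cases "u \<in> {an n..bn n}")
      case True
      then have "u \<in> {an (Suc n)..bn (Suc n)}" using an_dec[of n] bn_inc[of n] by auto
      then show ?thesis using True unfolding G_def by simp
    next
      case False then show ?thesis unfolding G_def by simp
    qed
  qed
  have G_sup: "(SUP n. G n u) = ennreal (f (T u) * D u * indicator {p<..<q} u)" for u
  proof (cases "u \<in> {p<..<q}")
    case True
    obtain n where n: "u \<in> {an n..bn n}" using cover[OF True] by blast
    have Gn: "G n u = ennreal (f (T u) * D u)" unfolding G_def using n by simp
    have "G m u \<le> ennreal (f (T u) * D u)" for m unfolding G_def
      using f0 pos[OF True] by (intro ennreal_leI) (auto simp: indicator_def)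
    then have "(SUP n. G n u) = ennreal (f (T u) * D u)"
      using Gn by (intro antisym SUP_least) (auto intro: SUP_upper2[of n])
    then show ?thesis using True by simp
  next
    case False
    then have "G n u = 0" for n unfolding G_def using sub[of n] by (auto simp: indicator_def)
    then show ?thesis using False by simp
  qed
  have "(\<integral>\<^sup>+y. ennreal (f y * indicator (T ` {p<..<q}) y) \<partial>lborel) = (\<integral>\<^sup>+y. (SUP n. F n y) \<partial>lborel)"
    using F_sup by simp
  also have "\<dots> = (SUP n. integral\<^sup>N lborel (F n))"
    by (rule nn_integral_monotone_convergence_SUP[OF F_inc]) (unfold F_def, measurable)
  also have "\<dots> = (SUP n. integral\<^sup>N lborel (G n))"
    using step unfolding F_def G_def by simp
  also have "\<dots> = (\<integral>\<^sup>+u. (SUP n. G n u) \<partial>lborel)"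
    using nn_integral_monotone_convergence_SUP[OF G_inc, of lborel] G_meas by simp
  also have "\<dots> = (\<integral>\<^sup>+u. ennreal (f (T u) * D u * indicator {p<..<q} u) \<partial>lborel)"
    using G_sup by simp
  finally show ?thesis .
qed


context regT begin

definition mass :: "nat \<Rightarrow> real \<Rightarrow> real" where
  "mass l x = (if x \<in> T ` P l then 1 / \<bar>Dx l (iota' l x)\<bar> else 0)"

lemma mass_meas: "l < L \<Longrightarrow> mass l \<in> borel_measurable borel"
proof -
  assume l: "l < L"
  have [measurable]: "iota' l \<in> borel_measurable borel" "Dx l \<in> borel_measurable borel"
      "T ` P l \<in> sets borel"
    using iota'_meas[OF l] Dx_meas[OF l] image_borel'[OF l] by auto
  show ?thesis unfolding mass_def by measurable
qed

lemma mass_nonneg: "0 \<le> mass l x" unfolding mass_def by simp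

lemma mass_T: assumes l: "l < L" and u: "u \<in> P l" shows "mass l (T u) = 1 / \<bar>D l u\<bar>"
proof -
  have "T u \<in> T ` P l" using u by simp
  moreover have "iota l (T u) = u" using iota[OF l u] by simp
  ultimately show ?thesis unfolding mass_def iota'_def Dx_def using u by simp
qed

lemma mass_out: "x \<notin> T ` P l \<Longrightarrow> mass l x = 0" unfolding mass_def by simp

lemma piece_subst:
  assumes l: "l < L" and fm[measurable]: "f \<in> borel_measurable borel" and f0: "\<And>y. 0 \<le> f y"
  shows "(\<integral>\<^sup>+y. ennreal (f y * indicator (T ` P l) y) \<partial>lborel)
       = (\<integral>\<^sup>+u. ennreal (f (T u) * \<bar>D l u\<bar> * indicator (P l) u) \<partial>lborel)"
proof (cases "incr l")
  case True
  have "(\<integral>\<^sup>+y. ennreal (f y * indicator (T ` {a l<..<a (Suc l)}) y) \<partial>lborel)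
       = (\<integral>\<^sup>+u. ennreal (f (T u) * D l u * indicator {a l<..<a (Suc l)} u) \<partial>lborel)"
  proof (rule subst_open[OF a_step[OF l] _ _ _ fm f0])
    show "\<And>u. u \<in> {a l<..<a (Suc l)} \<Longrightarrow> (T has_real_derivative D l u) (at u)"
      using D_props(2)[OF l] unfolding P_def by blast
    show "continuous_on {a l<..<a (Suc l)} (D l)" using D_props(1)[OF l] unfolding P_def .
    show "\<And>u. u \<in> {a l<..<a (Suc l)} \<Longrightarrow> 0 < D l u"
      using True unfolding incr_def P_def by (meson order_less_le_trans zero_less_one)
  qed
  also have "\<dots> = (\<integral>\<^sup>+u. ennreal (f (T u) * \<bar>D l u\<bar> * indicator (P l) u) \<partial>lborel)"
  proof (rule nn_integral_cong)
    fix u show "ennreal (f (T u) * D l u * indicator {a l<..<a (Suc l)} u) =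
        ennreal (f (T u) * \<bar>D l u\<bar> * indicator (P l) u)"
    proof (cases "u \<in> P l")
      case True
      then have "1 \<le> D l u" using \<open>incr l\<close> unfolding incr_def by blast
      then show ?thesis using True unfolding P_def by simp
    next
      case False then show ?thesis unfolding P_def by simp
    qed
  qed
  finally show ?thesis unfolding P_def .
next
  case False
  define f' where "f' y = f (- y)" for y
  have f'm[measurable]: "f' \<in> borel_measurable borel" unfolding f'_def by measurable
  have TP[measurable]: "T ` P l \<in> sets borel" using image_borel'[OF l] .
  have img: "x \<in> (\<lambda>u. - T u) ` P l \<longleftrightarrow> - x \<in> T ` P l" for x
    by (auto simp: image_iff) (metis minus_minus)
  have "(\<integral>\<^sup>+y. ennreal (f y * indicator (T ` P l) y) \<partial>lborel)
      = (\<integral>\<^sup>+x. ennreal (f (- x) * indicator (T ` P l) (- x)) \<partial>lborel)"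
    using nn_integral_real_affine[where c="-1" and t=0 and f="\<lambda>y. ennreal (f y * indicator (T ` P l) y)"]
    by simp
  also have "\<dots> = (\<integral>\<^sup>+x. ennreal (f' x * indicator ((\<lambda>u. - T u) ` P l) x) \<partial>lborel)"
    by (intro nn_integral_cong) (simp add: f'_def indicator_def img)
  also have "\<dots> = (\<integral>\<^sup>+u. ennreal (f' (- T u) * (- D l u) * indicator {a l<..<a (Suc l)} u) \<partial>lborel)"
    unfolding P_def
  proof (rule subst_open[OF a_step[OF l] _ _ _ f'm])
    show "\<And>u. u \<in> {a l<..<a (Suc l)} \<Longrightarrow> ((\<lambda>u. - T u) has_real_derivative - D l u) (at u)"
      using D_props(2)[OF l] unfolding P_def by (blast intro: DERIV_minus)
    show "continuous_on {a l<..<a (Suc l)} (\<lambda>u. - D l u)"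
      using D_props(1)[OF l] unfolding P_def by (intro continuous_intros)
    show "\<And>u. u \<in> {a l<..<a (Suc l)} \<Longrightarrow> 0 < - D l u"
      using sign[OF l False] unfolding P_def by fastforce
    show "\<And>y. 0 \<le> f' y" unfolding f'_def using f0 by simp
  qed
  also have "\<dots> = (\<integral>\<^sup>+u. ennreal (f (T u) * \<bar>D l u\<bar> * indicator (P l) u) \<partial>lborel)"
  proof (rule nn_integral_cong)
    fix u show "ennreal (f' (- T u) * - D l u * indicator {a l<..<a (Suc l)} u) =
        ennreal (f (T u) * \<bar>D l u\<bar> * indicator (P l) u)"
    proof (cases "u \<in> P l")
      case True
      then have "D l u \<le> -1" using sign[OF l False] by blast
      then show ?thesis using True unfolding P_def f'_def by simp
    next
      case False then show ?thesis unfolding P_def by simp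
    qed
  qed
  finally show ?thesis .
qed

lemma Pl_pre_meas: "l < L \<Longrightarrow> B \<in> sets borel \<Longrightarrow> P l \<inter> T -` B \<in> sets borel"
proof -
  assume l: "l < L" and B: "B \<in> sets borel"
  have "P l \<inter> T -` B = P l \<inter> {u\<in>{0..1}. T u \<in> B}" using P_sub[OF l] by auto
  moreover have "P l \<in> sets borel" unfolding P_def by simp
  ultimately show ?thesis using Tpre_meas[OF B] by simp
qed

lemma piece_meas:
  assumes l: "l < L" and B[measurable]: "B \<in> sets borel"
  shows "(\<integral>\<^sup>+x. ennreal (indicator B x * mass l x) \<partial>lborel) = emeasure lborel (P l \<inter> T -` B)"
proof -
  have mm[measurable]: "mass l \<in> borel_measurable borel" using mass_meas[OF l] .
  have "(\<integral>\<^sup>+x. ennreal (indicator B x * mass l x) \<partial>lborel)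
      = (\<integral>\<^sup>+x. ennreal ((indicator B x * mass l x) * indicator (T ` P l) x) \<partial>lborel)"
    by (intro nn_integral_cong) (auto simp: indicator_def mass_out)
  also have "\<dots> = (\<integral>\<^sup>+u. ennreal ((indicator B (T u) * mass l (T u)) * \<bar>D l u\<bar> * indicator (P l) u) \<partial>lborel)"
    by (rule piece_subst[OF l, where f="\<lambda>x. indicator B x * mass l x"]) (auto simp: mass_nonneg)
  also have "\<dots> = (\<integral>\<^sup>+u. indicator (P l \<inter> T -` B) u \<partial>lborel)"
  proof (rule nn_integral_cong)
    fix u show "ennreal ((indicator B (T u) * mass l (T u)) * \<bar>D l u\<bar> * indicator (P l) u) =
        indicator (P l \<inter> T -` B) u"
    proof (cases "u \<in> P l")
      case True
      have "1 \<le> \<bar>D l u\<bar>" using absD[OF l True] .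
      then show ?thesis using True mass_T[OF l True] by (simp add: indicator_def)
    next
      case False then show ?thesis by simp
    qed
  qed
  also have "\<dots> = emeasure lborel (P l \<inter> T -` B)"
    using Pl_pre_meas[OF l B] by simp
  finally show ?thesis .
qed

end

context regT begin

lemma h_dec: "stoch_G T A x 1 = (\<Sum>l<L. mass l x)"
proof -
  have "T ` (P l \<inter> {..1}) = T ` P l" if "l < L" for l
    using P_sub[OF that] by (intro arg_cong[where f="image T"]) auto
  then show ?thesis unfolding G_dec' mass_def by (intro sum.cong) auto
qed

lemma h_meas: "(\<lambda>x. stoch_G T A x 1) \<in> borel_measurable borel"
  using G_meas .

lemma int_h: assumes B[measurable]: "B \<in> sets borel"
  shows "(\<integral>\<^sup>+x. ennreal (indicator B x * stoch_G T A x 1) \<partial>lborel) = emeasure lborel (B \<inter> {0..1})"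
proof -
  have "(\<integral>\<^sup>+x. ennreal (indicator B x * stoch_G T A x 1) \<partial>lborel)
      = (\<integral>\<^sup>+x. (\<Sum>l<L. ennreal (indicator B x * mass l x)) \<partial>lborel)"
  proof (rule nn_integral_cong)
    fix x
    have "(\<Sum>l<L. ennreal (indicator B x * mass l x)) = ennreal (\<Sum>l<L. indicator B x * mass l x)"
      by (rule sum_ennreal) (simp add: mass_nonneg)
    then show "ennreal (indicator B x * stoch_G T A x 1) = (\<Sum>l<L. ennreal (indicator B x * mass l x))"
      unfolding h_dec by (simp add: sum_distrib_left)
  qed
  also have "\<dots> = (\<Sum>l<L. \<integral>\<^sup>+x. ennreal (indicator B x * mass l x) \<partial>lborel)"
  proof (rule nn_integral_sum)
    fix l assume "l \<in> {..<L}"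
    then have [measurable]: "mass l \<in> borel_measurable borel" using mass_meas by simp
    show "(\<lambda>x. ennreal (indicator B x * mass l x)) \<in> borel_measurable lborel" by simp
  qed
  also have "\<dots> = (\<Sum>l<L. emeasure lborel (P l \<inter> T -` B))"
    using piece_meas[OF _ B] by simp
  also have "\<dots> = emeasure lborel (\<Union>l\<in>{..<L}. P l \<inter> T -` B)"
  proof (rule sum_emeasure)
    show "(\<lambda>l. P l \<inter> T -` B) ` {..<L} \<subseteq> sets lborel" using Pl_pre_meas[OF _ B] by auto
    show "disjoint_family_on (\<lambda>l. P l \<inter> T -` B) {..<L}"
      unfolding disjoint_family_on_def using P_disj by blast
  qed simp
  also have "\<dots> = emeasure lborel {u\<in>{0..1}. T u \<in> B}"
  proof -
    define X where "X = (\<Union>l\<in>{..<L}. P l \<inter> T -` B)"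
    define Y where "Y = {u\<in>{0..1}. T u \<in> B}"
    have XY: "X \<subseteq> Y" unfolding X_def Y_def using P_sub by fastforce
    have YX: "Y \<subseteq> X \<union> a ` {..L}"
    proof
      fix u assume "u \<in> Y"
      then have u: "u \<in> {0..1}" "T u \<in> B" unfolding Y_def by auto
      show "u \<in> X \<union> a ` {..L}"
      proof (cases "u \<in> a ` {..L}")
        case False
        then have "u \<in> A" using A_cover u(1) by blast
        then show ?thesis using u(2) unfolding X_def A_eq by auto
      qed simp
    qed
    have Xm: "X \<in> sets borel" unfolding X_def
      by (rule sets.finite_UN) (auto intro: Pl_pre_meas[OF _ B])
    have Ym: "Y \<in> sets borel" unfolding Y_def using Tpre_meas[OF B] .
    have fm: "a ` {..L} \<in> sets borel" by (rule sets.countable) auto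
    have null: "emeasure lborel (a ` {..L}) = 0" by (rule emeasure_lborel_countable) auto
    have "emeasure lborel X \<le> emeasure lborel Y" using XY Ym by (intro emeasure_mono) auto
    moreover have "emeasure lborel Y \<le> emeasure lborel (X \<union> a ` {..L})"
      using YX Xm fm by (intro emeasure_mono) auto
    moreover have "emeasure lborel (X \<union> a ` {..L}) \<le> emeasure lborel X + emeasure lborel (a ` {..L})"
      using Xm fm by (intro emeasure_subadditive) auto
    ultimately have "emeasure lborel X = emeasure lborel Y" using null by (auto intro: antisym order_trans)
    then show ?thesis unfolding X_def Y_def .
  qed
  also have "\<dots> = emeasure lborel (B \<inter> {0..1})" using K[OF B] .
  finally show ?thesis .
qed

lemma mass_one: "AE x in lborel. x \<in> {0..1} \<longrightarrow> sum mm (R x) = 1"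
proof -
  have hm[measurable]: "(\<lambda>x. stoch_G T A x 1) \<in> borel_measurable borel" using G_meas .
  have dens: "density lborel (\<lambda>x. ennreal (stoch_G T A x 1)) = density lborel (\<lambda>x. indicator {0..1} x)"
  proof (rule measure_eqI)
    show "sets (density lborel (\<lambda>x. ennreal (stoch_G T A x 1))) = sets (density lborel (\<lambda>x. indicator {0..1} x))"
      by simp
    fix B assume "B \<in> sets (density lborel (\<lambda>x. ennreal (stoch_G T A x 1)))"
    then have B[measurable]: "B \<in> sets borel" by simp
    have "emeasure (density lborel (\<lambda>x. ennreal (stoch_G T A x 1))) B
        = (\<integral>\<^sup>+x. ennreal (stoch_G T A x 1) * indicator B x \<partial>lborel)"
      by (rule emeasure_density) auto
    also have "\<dots> = (\<integral>\<^sup>+x. ennreal (indicator B x * stoch_G T A x 1) \<partial>lborel)"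
      by (intro nn_integral_cong) (simp add: indicator_def)
    also have "\<dots> = emeasure lborel (B \<inter> {0..1})" using int_h[OF B] .
    also have "\<dots> = (\<integral>\<^sup>+x. indicator (B \<inter> {0..1}) x \<partial>lborel)" by simp
    also have "\<dots> = (\<integral>\<^sup>+x. indicator {0..1} x * indicator B x \<partial>lborel)"
      by (intro nn_integral_cong) (auto simp: indicator_def)
    also have "\<dots> = emeasure (density lborel (\<lambda>x. indicator {0..1} x)) B"
      by (rule emeasure_density[symmetric]) auto
    finally show "emeasure (density lborel (\<lambda>x. ennreal (stoch_G T A x 1))) B = emeasure (density lborel (\<lambda>x. indicator {0..1} x)) B" .
  qed
  have "AE x in lborel. ennreal (stoch_G T A x 1) = indicator {0..1} x"
    by (rule sigma_finite_measure.density_unique[OF sigma_finite_lborel _ _ dens]) auto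
  then show ?thesis
  proof (rule AE_mp, intro AE_I2 impI)
    fix x assume eq: "ennreal (stoch_G T A x 1) = indicator {0..1} x" and x: "x \<in> {0..1}"
    have "0 \<le> stoch_G T A x 1" using S_eq GG_nonneg GG_le_S by (metis order_trans)
    then have "stoch_G T A x 1 = 1" using eq x by simp
    then show "sum mm (R x) = 1" using S_eq by simp
  qed
qed

end

context regT begin

lemma deriv_sym: assumes sym: "symmetric_half T" and r: "r \<in> A"
  shows "deriv T (1 - r) = - deriv T r"
proof -
  obtain l where l: "l < L" "r \<in> P l" using A_piece[OF r] by blast
  have dT: "(T has_real_derivative D l r) (at r)" using D_props(2)[OF l] .
  have r01: "r \<in> {0<..<1}" using A_sub r by auto
  have "((\<lambda>v. T (1 - v)) has_real_derivative D l r * (-1)) (at (1 - r))"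
  proof (rule DERIV_chain2[where f=T])
    show "(T has_real_derivative D l r) (at (1 - (1 - r)))" using dT by simp
    show "((\<lambda>v. 1 - v) has_real_derivative -1) (at (1 - r))"
      by (auto intro!: derivative_eq_intros)
  qed
  then have "((\<lambda>v. T (1 - v)) has_real_derivative - D l r) (at (1 - r))" by simp
  then have "(T has_real_derivative - D l r) (at (1 - r))"
  proof (rule has_field_derivative_transform_within_open[where S="{0<..<1}", simplified])
    show "0 < 1 - r \<and> 1 - r < 1" using r01 by simp
    show "open {0<..<(1::real)}" by simp
    fix v :: real assume "0 < v \<and> v < 1"
    then show "T (1 - v) = T v" using sym unfolding symmetric_half_def by simp
  qed
  then show ?thesis using DERIV_imp_deriv deriv_eq[OF l] by simp
qed

lemma R_sym: assumes sym: "symmetric_half T" and x: "x \<notin> T ` a ` {..L}" and r: "r \<in> R x"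
  shows "1 - r \<in> R x \<and> mm (1 - r) = mm r"
proof -
  have rA: "r \<in> A" and Tr: "T r = x" using r unfolding R_def by auto
  have r01: "r \<in> {0<..<1}" using A_sub rA by auto
  have T1r: "T (1 - r) = x" using sym Tr r01 unfolding symmetric_half_def by simp
  have "1 - r \<notin> a ` {..L}" using x T1r by auto
  then have "1 - r \<in> A" using A_cover r01 by auto
  then show ?thesis using T1r deriv_sym[OF sym rA] unfolding R_def mm_def by simp
qed

lemma good_x: assumes sym: "symmetric_half T"
  shows "AE x in lborel. x \<in> {0..1} \<longrightarrow> (\<forall>z. 0 < z \<and> z < 1 \<and> (\<forall>r\<in>R x. z \<noteq> GG (R x) mm r)
      \<longrightarrow> stoch_inv T A x (1 - z) = 1 - stoch_inv T A x z)"
proof -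
  have fin: "finite (T ` a ` {..L})" by simp
  have nin: "AE x in lborel. x \<notin> T ` a ` {..L}"
  proof (rule AE_I')
    have c: "countable (T ` a ` {..L})" using fin countable_finite by blast
    have "emeasure lborel (T ` a ` {..L}) = 0" using emeasure_lborel_countable[OF c] .
    moreover have "T ` a ` {..L} \<in> sets lborel" by (rule sets.countable[OF _ c]) simp
    ultimately show "T ` a ` {..L} \<in> null_sets lborel" by (rule null_setsI)
  qed auto
  have both: "AE x in lborel. x \<notin> T ` a ` {..L} \<and> (x \<in> {0..1} \<longrightarrow> sum mm (R x) = 1)"
    using AE_conjI[OF nin mass_one] .
  show ?thesis
  proof (rule AE_mp[OF both], intro AE_I2 impI allI)
    fix x z assume H: "x \<notin> T ` a ` {..L} \<and> (x \<in> {0..1} \<longrightarrow> sum mm (R x) = 1)" and x: "x \<in> {0..1}"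
      and z: "0 < z \<and> z < 1 \<and> (\<forall>r\<in>R x. z \<noteq> GG (R x) mm r)"
    have tot: "sum mm (R x) = 1" using H x by simp
    then have "R x \<noteq> {}" by auto
    then have xT: "x \<in> T ` A" unfolding R_def by auto
    have "Inf {t. 1 - z \<le> GG (R x) mm t} = 1 - Inf {t. z \<le> GG (R x) mm t}"
      by (rule Q_sym[OF R_fin mm_pos' tot]) (use R_sym[OF sym] H z in auto)
    then show "stoch_inv T A x (1 - z) = 1 - stoch_inv T A x z"
      unfolding stoch_inv_eq using xT by simp
  qed
qed

end

lemma fst_borel[measurable]: "fst \<in> borel_measurable (borel :: ('a::topological_space \<times> 'b::topological_space) measure)"
  by (intro borel_measurable_continuous_onI continuous_on_fst continuous_on_id)

lemma snd_borel[measurable]: "snd \<in> borel_measurable (borel :: ('a::topological_space \<times> 'b::topological_space) measure)"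
  by (intro borel_measurable_continuous_onI continuous_on_snd continuous_on_id)

lemma sets_unif01[simp, measurable_cong]: "sets unif01 = sets borel"
  unfolding unif01_def by simp

lemma space_unif01[simp]: "space unif01 = UNIV"
  unfolding unif01_def by (simp add: space_uniform_measure)

lemma refl_pre[measurable]: "S \<in> sets borel \<Longrightarrow> (\<lambda>x::real. 1 - x) -` S \<in> sets borel"
proof -
  assume S: "S \<in> sets borel"
  have fm: "(\<lambda>x::real. 1 - x) \<in> borel_measurable borel" by measurable
  show ?thesis using measurable_sets[OF fm S] by simp
qed

lemma lborel_reflect: assumes S: "S \<in> sets borel"
  shows "emeasure lborel ((\<lambda>x::real. 1 - x) -` S) = emeasure lborel S"
proof -
  have [measurable]: "S \<in> sets borel" using S .
  have "emeasure lborel S = (\<integral>\<^sup>+x. indicator S x \<partial>lborel)" by simp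
  also have "\<dots> = (\<integral>\<^sup>+x. indicator S (1 - x) \<partial>lborel)"
    using nn_integral_real_affine[where c="-1" and t=1 and f="indicator S"] by simp
  also have "\<dots> = (\<integral>\<^sup>+x. indicator ((\<lambda>x::real. 1 - x) -` S) x \<partial>lborel)"
    by (intro nn_integral_cong) (simp add: indicator_def)
  also have "\<dots> = emeasure lborel ((\<lambda>x::real. 1 - x) -` S)"
  proof (rule nn_integral_indicator)
    have fm: "(\<lambda>x::real. 1 - x) \<in> borel_measurable borel" by measurable
    show "(\<lambda>x::real. 1 - x) -` S \<in> sets lborel" using measurable_sets[OF fm S] by simp
  qed
  finally show ?thesis by simp
qed

lemma unif_refl: "distr unif01 borel (\<lambda>x. 1 - x) = unif01"
proof (rule measure_eqI)
  show "sets (distr unif01 borel (\<lambda>x::real. 1 - x)) = sets unif01" by simp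
  fix B assume "B \<in> sets (distr unif01 borel (\<lambda>x::real. 1 - x))"
  then have B[measurable]: "B \<in> sets borel" by simp
  have m: "(\<lambda>x::real. 1 - x) \<in> measurable unif01 borel" by simp
  have "emeasure (distr unif01 borel (\<lambda>x::real. 1 - x)) B = emeasure unif01 ((\<lambda>x. 1 - x) -` B)"
    using emeasure_distr[OF m B] by simp
  also have "\<dots> = emeasure lborel ((\<lambda>x. 1 - x) -` B \<inter> {0..1})"
    by (rule unif01_emeasure) (rule refl_pre[OF B])
  also have "(\<lambda>x. 1 - x) -` B \<inter> {0..1} = (\<lambda>x::real. 1 - x) -` (B \<inter> {0..1})" by auto
  also have "emeasure lborel \<dots> = emeasure lborel (B \<inter> {0..1})" by (rule lborel_reflect) simp
  also have "\<dots> = emeasure unif01 B" using unif01_emeasure[OF B] by simp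
  finally show "emeasure (distr unif01 borel (\<lambda>x::real. 1 - x)) B = emeasure unif01 B" .
qed

lemma gen_sym:
  fixes M :: "'a measure" and X Y Z W :: "'a \<Rightarrow> real" and F G :: "real \<times> real \<Rightarrow> real"
    and E :: "real \<Rightarrow> real set"
  assumes ps: "prob_space M"
    and Xm[measurable]: "X \<in> borel_measurable M" and Ym[measurable]: "Y \<in> borel_measurable M"
    and Zm[measurable]: "Z \<in> borel_measurable M" and Wm[measurable]: "W \<in> borel_measurable M"
    and Xd: "distr M lborel X = unif01" and Zd: "distr M lborel Z = unif01"
    and dZW0: "distr M borel (\<lambda>\<omega>. (1 - Z \<omega>, W \<omega>)) = distr M borel (\<lambda>\<omega>. (Z \<omega>, W \<omega>))"
    and iXYZW: "prob_space.indep_var M borel (\<lambda>\<omega>. (X \<omega>, Y \<omega>)) borel (\<lambda>\<omega>. (Z \<omega>, W \<omega>))"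
    and Fm[measurable]: "F \<in> borel_measurable borel" and Gm[measurable]: "G \<in> borel_measurable borel"
    and finE: "\<And>x. finite (E x)"
    and good: "AE x in lborel. x \<in> {0..1} \<longrightarrow> (\<forall>z. 0 < z \<and> z < 1 \<and> z \<notin> E x \<longrightarrow> F (x, 1 - z) = 1 - F (x, z))"
  shows "distr M borel (\<lambda>\<omega>. (F (X \<omega>, Z \<omega>), G (Y \<omega>, W \<omega>))) =
         distr M borel (\<lambda>\<omega>. (1 - F (X \<omega>, Z \<omega>), G (Y \<omega>, W \<omega>)))"
proof -
  interpret prob_space M by (rule ps)
  have XB: "distr M borel X = unif01" using Xd by (metis distr_cong sets_lborel)
  have ZB: "distr M borel Z = unif01" using Zd by (metis distr_cong sets_lborel)
  define XY where "XY \<omega> = (X \<omega>, Y \<omega>)" for \<omega>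
  define ZW where "ZW \<omega> = (Z \<omega>, W \<omega>)" for \<omega>
  define ZW' where "ZW' \<omega> = (1 - Z \<omega>, W \<omega>)" for \<omega>
  have [measurable]: "XY \<in> borel_measurable M" "ZW \<in> borel_measurable M" "ZW' \<in> borel_measurable M"
    unfolding XY_def ZW_def ZW'_def by measurable
  have refl_m: "(\<lambda>p::real\<times>real. (1 - fst p, snd p)) \<in> borel_measurable borel" by measurable
  have iZW': "indep_var borel XY borel ZW'"
  proof -
    have "indep_var borel (id \<circ> XY) borel ((\<lambda>p. (1 - fst p, snd p)) \<circ> ZW)"
      by (rule indep_var_compose[OF iXYZW[folded XY_def ZW_def] _ refl_m]) simp
    then show ?thesis unfolding ZW'_def ZW_def comp_def by simp
  qed
  have dZW: "distr M borel ZW' = distr M borel ZW" using dZW0 unfolding ZW'_def ZW_def .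
  have J: "distr M borel (\<lambda>\<omega>. (XY \<omega>, ZW' \<omega>)) = distr M borel (\<lambda>\<omega>. (XY \<omega>, ZW \<omega>))"
  proof -
    have "distr M borel (\<lambda>\<omega>. (XY \<omega>, ZW' \<omega>)) = distr M borel XY \<Otimes>\<^sub>M distr M borel ZW'"
      using iZW'[unfolded indep_var_distribution_eq] unfolding borel_prod by simp
    also have "\<dots> = distr M borel XY \<Otimes>\<^sub>M distr M borel ZW" using dZW by simp
    also have "\<dots> = distr M borel (\<lambda>\<omega>. (XY \<omega>, ZW \<omega>))"
      using iXYZW[folded XY_def ZW_def, unfolded indep_var_distribution_eq] unfolding borel_prod by simp
    finally show ?thesis .
  qed
  have iXZ: "indep_var borel X borel Z"
  proof -
    have "indep_var borel (fst \<circ> XY) borel (fst \<circ> ZW)"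
      by (rule indep_var_compose[OF iXYZW[folded XY_def ZW_def]]) auto
    then show ?thesis unfolding XY_def ZW_def comp_def by simp
  qed
  have dXZ: "distr M borel (\<lambda>\<omega>. (X \<omega>, Z \<omega>)) = unif01 \<Otimes>\<^sub>M unif01"
    using iXZ[unfolded indep_var_distribution_eq] XB ZB unfolding borel_prod by simp
  define Bad where "Bad = {p::real\<times>real. F (fst p, 1 - snd p) \<noteq> 1 - F p}"
  have Bad_m[measurable]: "Bad \<in> sets borel"
  proof -
    have "{p \<in> space borel. F (fst p, 1 - snd p) \<noteq> 1 - F p} \<in> sets borel" by measurable
    then show ?thesis unfolding Bad_def by simp
  qed
  have "AE x in unif01. emeasure unif01 (Pair x -` Bad) = 0"
  proof -
    have "AE x in unif01. (\<forall>z. 0 < z \<and> z < 1 \<and> z \<notin> E x \<longrightarrow> F (x, 1 - z) = 1 - F (x, z))"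
      unfolding unif01_def by (rule AE_uniform_measureI) (use good in auto)
    then show ?thesis
    proof (rule AE_mp, intro AE_I2 impI)
      fix x assume gx: "\<forall>z. 0 < z \<and> z < 1 \<and> z \<notin> E x \<longrightarrow> F (x, 1 - z) = 1 - F (x, z)"
      have sub: "Pair x -` Bad \<subseteq> - {0<..<1} \<union> E x"
      proof
        fix z assume "z \<in> Pair x -` Bad"
        then have ne: "F (x, 1 - z) \<noteq> 1 - F (x, z)" unfolding Bad_def by simp
        show "z \<in> - {0<..<1} \<union> E x"
        proof (rule ccontr)
          assume "z \<notin> - {0<..<1} \<union> E x"
          then have "0 < z \<and> z < 1 \<and> z \<notin> E x" by simp
          then have "F (x, 1 - z) = 1 - F (x, z)" using gx by blast
          then show False using ne by simp
        qed
      qed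
      have Em: "E x \<in> sets borel" using finE[of x] by (rule_tac sets.countable) (auto intro: countable_finite)
      have "emeasure unif01 (Pair x -` Bad) \<le> emeasure unif01 (- {0<..<1} \<union> E x)"
        using sub Em by (intro emeasure_mono) auto
      also have "\<dots> = emeasure lborel ((- {0<..<1} \<union> E x) \<inter> {0..1})"
        using Em by (intro unif01_emeasure) auto
      also have "\<dots> \<le> emeasure lborel ({0, 1} \<union> E x)"
        using Em by (intro emeasure_mono) auto
      also have "\<dots> = 0"
        using finE[of x] by (rule_tac emeasure_lborel_countable) (auto intro: countable_finite)
      finally show "emeasure unif01 (Pair x -` Bad) = 0" by simp
    qed
  qed
  then have "(\<integral>\<^sup>+x. emeasure unif01 (Pair x -` Bad) \<partial>unif01) = (\<integral>\<^sup>+x. 0 \<partial>unif01)"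
    by (rule nn_integral_cong_AE)
  then have "(\<integral>\<^sup>+x. emeasure unif01 (Pair x -` Bad) \<partial>unif01) = 0" by simp
  moreover have "emeasure (unif01 \<Otimes>\<^sub>M unif01) Bad = (\<integral>\<^sup>+x. emeasure unif01 (Pair x -` Bad) \<partial>unif01)"
  proof (rule sigma_finite_measure.emeasure_pair_measure_alt)
    show "sigma_finite_measure unif01"
      unfolding unif01_def by (intro prob_space_imp_sigma_finite prob_space_uniform_measure) auto
    have "sets (unif01 \<Otimes>\<^sub>M unif01) = sets (borel \<Otimes>\<^sub>M borel :: (real \<times> real) measure)"
      by (rule sets_pair_measure_cong) simp_all
    also have "\<dots> = sets (borel :: (real \<times> real) measure)" by (simp only: borel_prod)
    finally show "Bad \<in> sets (unif01 \<Otimes>\<^sub>M unif01)" using Bad_m by simp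
  qed
  ultimately have "emeasure (distr M borel (\<lambda>\<omega>. (X \<omega>, Z \<omega>))) Bad = 0" using dXZ by simp
  then have null: "emeasure M ((\<lambda>\<omega>. (X \<omega>, Z \<omega>)) -` Bad \<inter> space M) = 0"
    by (subst (asm) emeasure_distr) auto
  have AEgood: "AE \<omega> in M. F (X \<omega>, 1 - Z \<omega>) = 1 - F (X \<omega>, Z \<omega>)"
  proof (rule AE_I')
    show "(\<lambda>\<omega>. (X \<omega>, Z \<omega>)) -` Bad \<inter> space M \<in> null_sets M"
      using null by (intro null_setsI) auto
    show "{\<omega> \<in> space M. \<not> F (X \<omega>, 1 - Z \<omega>) = 1 - F (X \<omega>, Z \<omega>)} \<subseteq> (\<lambda>\<omega>. (X \<omega>, Z \<omega>)) -` Bad \<inter> space M"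
      unfolding Bad_def by auto
  qed
  define Phi where "Phi q = (F (fst (fst q), fst (snd q)), G (snd (fst q), snd (snd q)))"
    for q :: "(real \<times> real) \<times> (real \<times> real)"
  have Phim[measurable]: "Phi \<in> borel_measurable borel" unfolding Phi_def by measurable
  have "distr M borel (\<lambda>\<omega>. (1 - F (X \<omega>, Z \<omega>), G (Y \<omega>, W \<omega>)))
      = distr M borel (\<lambda>\<omega>. (F (X \<omega>, 1 - Z \<omega>), G (Y \<omega>, W \<omega>)))"
    by (rule distr_cong_AE) (use AEgood in \<open>auto\<close>)
  also have "\<dots> = distr M borel (Phi \<circ> (\<lambda>\<omega>. (XY \<omega>, ZW' \<omega>)))"
    unfolding Phi_def XY_def ZW'_def comp_def by simp
  also have "\<dots> = distr (distr M borel (\<lambda>\<omega>. (XY \<omega>, ZW' \<omega>))) borel Phi"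
    by (rule distr_distr[symmetric]) auto
  also have "\<dots> = distr (distr M borel (\<lambda>\<omega>. (XY \<omega>, ZW \<omega>))) borel Phi" using J by simp
  also have "\<dots> = distr M borel (Phi \<circ> (\<lambda>\<omega>. (XY \<omega>, ZW \<omega>)))"
    by (rule distr_distr) auto
  also have "\<dots> = distr M borel (\<lambda>\<omega>. (F (X \<omega>, Z \<omega>), G (Y \<omega>, W \<omega>)))"
    unfolding Phi_def XY_def ZW_def comp_def by simp
  finally show ?thesis by simp
qed

lemma refl_first:
  fixes M :: "'a measure" and Z W :: "'a \<Rightarrow> real"
  assumes ps: "prob_space M"
    and Zm[measurable]: "Z \<in> borel_measurable M" and Wm[measurable]: "W \<in> borel_measurable M"
    and Zd: "distr M lborel Z = unif01"
    and iZW: "prob_space.indep_var M borel Z borel W"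
  shows "distr M borel (\<lambda>\<omega>. (1 - Z \<omega>, W \<omega>)) = distr M borel (\<lambda>\<omega>. (Z \<omega>, W \<omega>))"
proof -
  interpret prob_space M by (rule ps)
  have ZB: "distr M borel Z = unif01" using Zd by (metis distr_cong sets_lborel)
  have i1ZW: "indep_var borel (\<lambda>\<omega>. 1 - Z \<omega>) borel W"
  proof -
    have "indep_var borel ((\<lambda>z. 1 - z) \<circ> Z) borel (id \<circ> W)"
      by (rule indep_var_compose[OF iZW]) auto
    then show ?thesis unfolding comp_def by simp
  qed
  have dZ': "distr M borel (\<lambda>\<omega>. 1 - Z \<omega>) = distr M borel Z"
  proof -
    have "distr M borel (\<lambda>\<omega>. 1 - Z \<omega>) = distr (distr M borel Z) borel (\<lambda>x. 1 - x)"
      by (subst distr_distr) (auto simp: comp_def)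
    also have "\<dots> = distr unif01 borel (\<lambda>x. 1 - x)" using ZB by simp
    also have "\<dots> = distr M borel Z" using unif_refl ZB by simp
    finally show ?thesis .
  qed
  have "distr M borel (\<lambda>\<omega>. (1 - Z \<omega>, W \<omega>)) = distr M borel (\<lambda>\<omega>. 1 - Z \<omega>) \<Otimes>\<^sub>M distr M borel W"
    using i1ZW[unfolded indep_var_distribution_eq] unfolding borel_prod by simp
  also have "\<dots> = distr M borel Z \<Otimes>\<^sub>M distr M borel W" using dZ' by simp
  also have "\<dots> = distr M borel (\<lambda>\<omega>. (Z \<omega>, W \<omega>))"
    using iZW[unfolded indep_var_distribution_eq] unfolding borel_prod by simp
  finally show ?thesis .
qed

lemma refl_second:
  fixes M :: "'a measure" and Z W :: "'a \<Rightarrow> real"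
  assumes ps: "prob_space M"
    and Zm[measurable]: "Z \<in> borel_measurable M" and Wm[measurable]: "W \<in> borel_measurable M"
    and Wd: "distr M lborel W = unif01"
    and iZW: "prob_space.indep_var M borel Z borel W"
  shows "distr M borel (\<lambda>\<omega>. (Z \<omega>, 1 - W \<omega>)) = distr M borel (\<lambda>\<omega>. (Z \<omega>, W \<omega>))"
proof -
  interpret prob_space M by (rule ps)
  have WB: "distr M borel W = unif01" using Wd by (metis distr_cong sets_lborel)
  have i1ZW: "indep_var borel Z borel (\<lambda>\<omega>. 1 - W \<omega>)"
  proof -
    have "indep_var borel (id \<circ> Z) borel ((\<lambda>z. 1 - z) \<circ> W)"
      by (rule indep_var_compose[OF iZW]) auto
    then show ?thesis unfolding comp_def by simp
  qed
  have dW': "distr M borel (\<lambda>\<omega>. 1 - W \<omega>) = distr M borel W"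
  proof -
    have "distr M borel (\<lambda>\<omega>. 1 - W \<omega>) = distr (distr M borel W) borel (\<lambda>x. 1 - x)"
      by (subst distr_distr) (auto simp: comp_def)
    also have "\<dots> = distr unif01 borel (\<lambda>x. 1 - x)" using WB by simp
    also have "\<dots> = distr M borel W" using unif_refl WB by simp
    finally show ?thesis .
  qed
  have "distr M borel (\<lambda>\<omega>. (Z \<omega>, 1 - W \<omega>)) = distr M borel Z \<Otimes>\<^sub>M distr M borel (\<lambda>\<omega>. 1 - W \<omega>)"
    using i1ZW[unfolded indep_var_distribution_eq] unfolding borel_prod by simp
  also have "\<dots> = distr M borel Z \<Otimes>\<^sub>M distr M borel W" using dW' by simp
  also have "\<dots> = distr M borel (\<lambda>\<omega>. (Z \<omega>, W \<omega>))"
    using iZW[unfolded indep_var_distribution_eq] unfolding borel_prod by simp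
  finally show ?thesis .
qed

lemma swap_distr:
  fixes M :: "'a measure" and f g :: "'a \<Rightarrow> real"
  assumes [measurable]: "f \<in> borel_measurable M" "g \<in> borel_measurable M"
  shows "distr M borel (\<lambda>\<omega>. (g \<omega>, f \<omega>)) = distr (distr M borel (\<lambda>\<omega>. (f \<omega>, g \<omega>))) borel (\<lambda>p. (snd p, fst p))"
  by (subst distr_distr) (auto simp: comp_def)


theorem proposition9:
  fixes M :: "'a measure"
    and Us Vs Z1 Z2 :: "'a \<Rightarrow> real"
    and T1 T2 :: "real \<Rightarrow> real"
    and a1 a2 :: "nat \<Rightarrow> real" and L1 L2 :: nat
  assumes "prob_space M"
    and "Us \<in> borel_measurable M" and "Vs \<in> borel_measurable M"
    and "Z1 \<in> borel_measurable M" and "Z2 \<in> borel_measurable M"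
    and "distr M lborel Us = unif01" and "distr M lborel Vs = unif01"
    and "distr M lborel Z1 = unif01" and "distr M lborel Z2 = unif01"
    and "prob_space.indep_var M borel Z1 borel Z2"
    and "prob_space.indep_var M borel (\<lambda>\<omega>. (Us \<omega>, Vs \<omega>)) borel (\<lambda>\<omega>. (Z1 \<omega>, Z2 \<omega>))"
    and "udp T1" and "regular_partition T1 a1 L1"
    and "udp T2" and "regular_partition T2 a2 L2"
  defines "U \<equiv> (\<lambda>\<omega>. stoch_inv T1 (part_set a1 L1) (Us \<omega>) (Z1 \<omega>))"
    and "V \<equiv> (\<lambda>\<omega>. stoch_inv T2 (part_set a2 L2) (Vs \<omega>) (Z2 \<omega>))"
  shows "(symmetric_half T1 \<longrightarrow>
            distr M borel (\<lambda>\<omega>. (U \<omega>, V \<omega>)) = distr M borel (\<lambda>\<omega>. (1 - U \<omega>, V \<omega>)))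
       \<and> (symmetric_half T2 \<longrightarrow>
            distr M borel (\<lambda>\<omega>. (U \<omega>, V \<omega>)) = distr M borel (\<lambda>\<omega>. (U \<omega>, 1 - V \<omega>)))
       \<and> (symmetric_half T1 \<and> symmetric_half T2 \<longrightarrow>
            distr M borel (\<lambda>\<omega>. (U \<omega>, V \<omega>)) = distr M borel (\<lambda>\<omega>. (1 - U \<omega>, V \<omega>))
          \<and> distr M borel (\<lambda>\<omega>. (U \<omega>, V \<omega>)) = distr M borel (\<lambda>\<omega>. (U \<omega>, 1 - V \<omega>)))"
proof -
  note ps = assms(1)
  interpret prob_space M by (rule ps)
  note [measurable] = assms(2-5)
  interpret r1: regT T1 a1 L1 using assms(12,13) by unfold_locales
  interpret r2: regT T2 a2 L2 using assms(14,15) by unfold_locales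
  define F1 where "F1 p = stoch_inv T1 (part_set a1 L1) (fst p) (snd p)" for p
  define F2 where "F2 p = stoch_inv T2 (part_set a2 L2) (fst p) (snd p)" for p
  have F1m[measurable]: "F1 \<in> borel_measurable borel"
    using r1.stoch_inv_meas unfolding r1.A_def borel_prod F1_def .
  have F2m[measurable]: "F2 \<in> borel_measurable borel"
    using r2.stoch_inv_meas unfolding r2.A_def borel_prod F2_def .
  have Ueq: "U = (\<lambda>\<omega>. F1 (Us \<omega>, Z1 \<omega>))" unfolding U_def F1_def by simp
  have Veq: "V = (\<lambda>\<omega>. F2 (Vs \<omega>, Z2 \<omega>))" unfolding V_def F2_def by simp
  have [measurable]: "U \<in> borel_measurable M" "V \<in> borel_measurable M" unfolding Ueq Veq by measurable
  define E1 where "E1 x = GG (r1.R x) r1.mm ` r1.R x" for x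
  define E2 where "E2 x = GG (r2.R x) r2.mm ` r2.R x" for x
  have finE1: "finite (E1 x)" for x unfolding E1_def using r1.R_fin by simp
  have finE2: "finite (E2 x)" for x unfolding E2_def using r2.R_fin by simp
  have good1: "AE x in lborel. x \<in> {0..1} \<longrightarrow> (\<forall>z. 0 < z \<and> z < 1 \<and> z \<notin> E1 x \<longrightarrow> F1 (x, 1 - z) = 1 - F1 (x, z))"
    if s: "symmetric_half T1"
    using r1.good_x[OF s] by eventually_elim (auto simp: E1_def F1_def r1.A_def)
  have good2: "AE x in lborel. x \<in> {0..1} \<longrightarrow> (\<forall>z. 0 < z \<and> z < 1 \<and> z \<notin> E2 x \<longrightarrow> F2 (x, 1 - z) = 1 - F2 (x, z))"
    if s: "symmetric_half T2"
    using r2.good_x[OF s] by eventually_elim (auto simp: E2_def F2_def r2.A_def)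
  have vs: "distr M borel (\<lambda>\<omega>. (U \<omega>, V \<omega>)) = distr M borel (\<lambda>\<omega>. (1 - U \<omega>, V \<omega>))"
    if s: "symmetric_half T1"
    unfolding Ueq Veq
    by (rule gen_sym[OF ps assms(2-5,6,8) refl_first[OF ps assms(4,5,8,10)] assms(11) F1m F2m finE1 good1[OF s]])
  have hs: "distr M borel (\<lambda>\<omega>. (U \<omega>, V \<omega>)) = distr M borel (\<lambda>\<omega>. (U \<omega>, 1 - V \<omega>))"
    if s: "symmetric_half T2"
  proof -
    have dZ: "distr M borel (\<lambda>\<omega>. (1 - Z2 \<omega>, Z1 \<omega>)) = distr M borel (\<lambda>\<omega>. (Z2 \<omega>, Z1 \<omega>))"
    proof -
      have "distr M borel (\<lambda>\<omega>. (1 - Z2 \<omega>, Z1 \<omega>)) = distr (distr M borel (\<lambda>\<omega>. (Z1 \<omega>, 1 - Z2 \<omega>))) borel (\<lambda>p. (snd p, fst p))"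
        by (rule swap_distr) auto
      also have "\<dots> = distr (distr M borel (\<lambda>\<omega>. (Z1 \<omega>, Z2 \<omega>))) borel (\<lambda>p. (snd p, fst p))"
        using refl_second[OF ps assms(4,5,9,10)] by simp
      also have "\<dots> = distr M borel (\<lambda>\<omega>. (Z2 \<omega>, Z1 \<omega>))"
        by (rule swap_distr[symmetric]) auto
      finally show ?thesis .
    qed
    have iS: "indep_var borel (\<lambda>\<omega>. (Vs \<omega>, Us \<omega>)) borel (\<lambda>\<omega>. (Z2 \<omega>, Z1 \<omega>))"
    proof -
      have sm: "(\<lambda>p::real\<times>real. (snd p, fst p)) \<in> borel_measurable borel" by measurable
      have "indep_var borel ((\<lambda>p. (snd p, fst p)) \<circ> (\<lambda>\<omega>. (Us \<omega>, Vs \<omega>))) borel ((\<lambda>p. (snd p, fst p)) \<circ> (\<lambda>\<omega>. (Z1 \<omega>, Z2 \<omega>)))"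
        by (rule indep_var_compose[OF assms(11) sm sm])
      then show ?thesis by (simp add: comp_def)
    qed
    have g: "distr M borel (\<lambda>\<omega>. (F2 (Vs \<omega>, Z2 \<omega>), F1 (Us \<omega>, Z1 \<omega>))) =
         distr M borel (\<lambda>\<omega>. (1 - F2 (Vs \<omega>, Z2 \<omega>), F1 (Us \<omega>, Z1 \<omega>)))"
      by (rule gen_sym[OF ps assms(3,2,5,4,7,9) dZ iS F2m F1m finE2 good2[OF s]])
    have "distr M borel (\<lambda>\<omega>. (U \<omega>, V \<omega>)) = distr (distr M borel (\<lambda>\<omega>. (V \<omega>, U \<omega>))) borel (\<lambda>p. (snd p, fst p))"
      by (rule swap_distr) auto
    also have "\<dots> = distr (distr M borel (\<lambda>\<omega>. (1 - V \<omega>, U \<omega>))) borel (\<lambda>p. (snd p, fst p))"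
      using g unfolding Ueq Veq by simp
    also have "\<dots> = distr M borel (\<lambda>\<omega>. (U \<omega>, 1 - V \<omega>))"
      by (rule swap_distr[symmetric]) auto
    finally show ?thesis .
  qed
  show ?thesis using vs hs by blast
qed


end
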